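(* Let $c>0$, $d\ge1$, and for $x:\mathbb{R}\to\mathbb{R}^d$ with $|\dot x|<c$ write $v=\dot x$, $a=\ddot x$, $b=\dddot x$, $\gamma=(1-|v|^2/c^2)^{-1/2}$. Consider the system (zero relativistic jerk) $$B_i:=b_i+3\,\frac{v_ka_k}{c^2-v_kv_k}\,a_i=0,\qquad i=1,\dots,d$$ (summation over $k$), equivalently $\vec B=\vec b+3\gamma^2\frac{\vec v\cdot\vec a}{c^2}\vec a=0$. Its Lie algebra of Lie point symmetries is spanned by the $\frac{d(d-1)}{2}+3d+3$ vector fields $$\partial_t,\quad \partial_i,\quad x_i\partial_t+c^2t\partial_i,\quad x_j\partial_i-x_i\partial_j,\quad t\partial_t+x^i\partial_i,$$ $$(c^2t^2-x^jx_j)\partial_i+2x_i(t\partial_t+x^j\partial_j),\quad (c^2t^2+x^jx_j)\partial_t+2c^2tx^j\partial_j,$$ which form the conformal algebra of $(d+1)$-dimensional Minkowski space-time.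
   Context: Spatial indices are Euclidean, so $x_i=x^i$. Lie point symmetry: for a system of ODEs $F^a(t,x,\dot x,\dots,x^{(n)})=0$, the vector field $V=f(t,x)\partial_t+\xi^i(t,x)\partial_{x^i}$ ($f,\xi^i$ smooth) is a Lie point symmetry if the functional variation $\bar\delta x^i=\xi^i-\dot x^if$ satisfies the linearized equations $\sum_k\frac{\partial F^a}{\partial x^{j(k)}}\frac{\mathrm{d}^k}{\mathrm{d}t^k}\bar\delta x^j=0$ identically on all solutions (equivalently, the $n$-th prolongation of $V$ annihilates $F^a$ on the solution set). *)

theory Defs
  imports "HOL-Analysis.Analysis"
begin

fun iter_dd :: "'a::real_normed_vector list \<Rightarrow> ('a \<Rightarrow> 'b::real_normed_vector) \<Rightarrow> 'a \<Rightarrow> 'b" where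
  "iter_dd [] g = g"
| "iter_dd (e # es) g = iter_dd es (\<lambda>p. frechet_derivative g (at p) e)"

definition smooth_fun :: "('a::real_normed_vector \<Rightarrow> 'b::real_normed_vector) \<Rightarrow> bool" where
  "smooth_fun g \<longleftrightarrow> (\<forall>es p. iter_dd es g differentiable (at p))"

definition vd :: "(real \<Rightarrow> 'a::real_normed_vector) \<Rightarrow> real \<Rightarrow> 'a" where
  "vd y = (\<lambda>t. vector_derivative y (at t))"

definition smooth_curve_on :: "real set \<Rightarrow> (real \<Rightarrow> 'a::real_normed_vector) \<Rightarrow> bool" where
  "smooth_curve_on I y \<longleftrightarrow>
     (\<forall>k. \<forall>t\<in>I. (((vd ^^ k) y) has_vector_derivative ((vd ^^ Suc k) y t)) (at t))"

definition Bsys :: "real \<Rightarrow> real^'n \<Rightarrow> real^'n \<Rightarrow> real^'n \<Rightarrow> real^'n" where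
  "Bsys c v a b = b + (3 * (v \<bullet> a) / (c\<^sup>2 - v \<bullet> v)) *\<^sub>R a"

definition is_solution :: "real \<Rightarrow> real set \<Rightarrow> (real \<Rightarrow> real^'n) \<Rightarrow> bool" where
  "is_solution c I x \<longleftrightarrow> open I \<and> smooth_curve_on I x \<and>
     (\<forall>t\<in>I. norm (vd x t) < c \<and> Bsys c (vd x t) ((vd ^^ 2) x t) ((vd ^^ 3) x t) = 0)"

text \<open>Linearization of B at (v,a,b) applied to (eta1,eta2,eta3) = (eta', eta'', eta''');
  equals sum_k dB/dx^(k) eta^(k) (B does not depend on t, x).\<close>
definition linB :: "real \<Rightarrow> real^'n \<Rightarrow> real^'n \<Rightarrow> real^'n \<Rightarrow> real^'n \<Rightarrow> real^'n \<Rightarrow> real^'n \<Rightarrow> real^'n" where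
  "linB c v a b e1 e2 e3 =
     vector_derivative (\<lambda>s. Bsys c (v + s *\<^sub>R e1) (a + s *\<^sub>R e2) (b + s *\<^sub>R e3)) (at 0)"

text \<open>A vector field V(t,x) = (f(t,x), xi(t,x)) is a Lie point symmetry: V smooth and the
  functional variation delta x = xi - xdot f satisfies the linearized equations on every solution.\<close>
definition lie_point_symmetry :: "real \<Rightarrow> (real \<times> (real^'n) \<Rightarrow> real \<times> (real^'n)) \<Rightarrow> bool" where
  "lie_point_symmetry c V \<longleftrightarrow> smooth_fun V \<and>
     (\<forall>I x. is_solution c I x \<longrightarrow>
        (let \<delta> = (\<lambda>t. snd (V (t, x t)) - fst (V (t, x t)) *\<^sub>R vd x t) in
         \<forall>t\<in>I. linB c (vd x t) ((vd ^^ 2) x t) ((vd ^^ 3) x t)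
                      (vd \<delta> t) ((vd ^^ 2) \<delta> t) ((vd ^^ 3) \<delta> t) = 0))"

section \<open>The generators (components (f, xi) of f d_t + xi^i d_i)\<close>

definition G_t :: "real \<times> (real^'n) \<Rightarrow> real \<times> (real^'n)" where
  "G_t = (\<lambda>(t, x). (1, 0))"

definition G_x :: "'n \<Rightarrow> real \<times> (real^'n) \<Rightarrow> real \<times> (real^'n)" where
  "G_x i = (\<lambda>(t, x). (0, axis i 1))"

definition G_boost :: "real \<Rightarrow> 'n \<Rightarrow> real \<times> (real^'n) \<Rightarrow> real \<times> (real^'n)" where
  "G_boost c i = (\<lambda>(t, x). (x $ i, (c\<^sup>2 * t) *\<^sub>R axis i 1))"

definition G_rot :: "'n \<Rightarrow> 'n \<Rightarrow> real \<times> (real^'n) \<Rightarrow> real \<times> (real^'n)" where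
  "G_rot i j = (\<lambda>(t, x). (0, (x $ j) *\<^sub>R axis i 1 - (x $ i) *\<^sub>R axis j 1))"

definition G_dil :: "real \<times> (real^'n) \<Rightarrow> real \<times> (real^'n)" where
  "G_dil = (\<lambda>(t, x). (t, x))"

definition G_sc :: "real \<Rightarrow> 'n \<Rightarrow> real \<times> (real^'n) \<Rightarrow> real \<times> (real^'n)" where
  "G_sc c i = (\<lambda>(t, x). (2 * x $ i * t,
      (c\<^sup>2 * t\<^sup>2 - x \<bullet> x) *\<^sub>R axis i 1 + (2 * x $ i) *\<^sub>R x))"

definition G_sct :: "real \<Rightarrow> real \<times> (real^'n) \<Rightarrow> real \<times> (real^'n)" where
  "G_sct c = (\<lambda>(t, x). (c\<^sup>2 * t\<^sup>2 + x \<bullet> x, (2 * c\<^sup>2 * t) *\<^sub>R x))"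

text \<open>Real linear span of all the generators (rotations over all ordered pairs, which gives
  the same span as over i<j).\<close>
definition in_generator_span :: "real \<Rightarrow> (real \<times> (real^'n) \<Rightarrow> real \<times> (real^'n)) \<Rightarrow> bool" where
  "in_generator_span c V \<longleftrightarrow>
     (\<exists>a0 (a1::'n \<Rightarrow> real) (a2::'n \<Rightarrow> real) (a3::'n \<Rightarrow> 'n \<Rightarrow> real) a4 (a5::'n \<Rightarrow> real) a6.
        \<forall>p. V p = a0 *\<^sub>R G_t p + (\<Sum>i\<in>UNIV. a1 i *\<^sub>R G_x i p)
               + (\<Sum>i\<in>UNIV. a2 i *\<^sub>R G_boost c i p)
               + (\<Sum>i\<in>UNIV. \<Sum>j\<in>UNIV. a3 i j *\<^sub>R G_rot i j p)
               + a4 *\<^sub>R G_dil p + (\<Sum>i\<in>UNIV. a5 i *\<^sub>R G_sc c i p) + a6 *\<^sub>R G_sct c p)"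

end

theory Submission
  imports Defs "HOL-Computational_Algebra.Polynomial"
begin

definition dd :: "('a::real_normed_vector \<Rightarrow> 'b::real_normed_vector) \<Rightarrow> 'a \<Rightarrow> 'a \<Rightarrow> 'b" where
  "dd V h = (\<lambda>p. frechet_derivative V (at p) h)"

lemma iter_dd_Cons: "iter_dd (h # es) V = iter_dd es (dd V h)"
  by (simp add: dd_def)

lemma smooth_dd: "smooth_fun V \<Longrightarrow> smooth_fun (dd V h)"
  unfolding smooth_fun_def by (metis iter_dd_Cons)

lemma smooth_differentiable: "smooth_fun V \<Longrightarrow> V differentiable (at p)"
  unfolding smooth_fun_def by (metis iter_dd.simps(1))

lemma smooth_has_derivative: "smooth_fun V \<Longrightarrow> (V has_derivative (\<lambda>h. dd V h p)) (at p)"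
  unfolding dd_def using smooth_differentiable frechet_derivative_works by fastforce

lemma smooth_linear: "smooth_fun V \<Longrightarrow> bounded_linear (\<lambda>h. dd V h p)"
  using smooth_has_derivative has_derivative_bounded_linear by blast

lemma dd_add: "smooth_fun V \<Longrightarrow> dd V (h + k) p = dd V h p + dd V k p"
  using linear_add[OF bounded_linear.linear[OF smooth_linear[of V p]]] by simp
lemma dd_scale: "smooth_fun V \<Longrightarrow> dd V (r *\<^sub>R h) p = r *\<^sub>R dd V h p"
  using linear_scale[OF bounded_linear.linear[OF smooth_linear[of V p]]] by simp
lemma dd_diff: "smooth_fun V \<Longrightarrow> dd V (h - k) p = dd V h p - dd V k p"
  using linear_diff[OF bounded_linear.linear[OF smooth_linear[of V p]]] by simp
lemma dd_neg: "smooth_fun V \<Longrightarrow> dd V (- h) p = - dd V h p"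
  using linear_neg[OF bounded_linear.linear[OF smooth_linear[of V p]]] by simp
lemma dd_zero: "smooth_fun V \<Longrightarrow> dd V 0 p = 0"
  using linear_0[OF bounded_linear.linear[OF smooth_linear[of V p]]] by simp
lemma dd_sum: "smooth_fun V \<Longrightarrow> dd V (\<Sum>i\<in>S. h i) p = (\<Sum>i\<in>S. dd V (h i) p)"
  using linear_sum[OF bounded_linear.linear[OF smooth_linear[of V p]]] by simp

lemma dd_unique: "(V has_derivative D) (at p) \<Longrightarrow> dd V h p = D h"
  unfolding dd_def using frechet_derivative_at by metis

lemma smooth_blin:
  fixes L :: "'b::real_normed_vector \<Rightarrow> 'c::real_normed_vector" and V :: "'a::real_normed_vector \<Rightarrow> 'b"
  assumes L: "bounded_linear L" and V: "smooth_fun V"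
  shows "smooth_fun (\<lambda>p. L (V p))"
proof -
  have "\<forall>V. smooth_fun V \<longrightarrow> iter_dd es (\<lambda>p. L (V p)) = (\<lambda>p. L (iter_dd es V p))" for es :: "'a list"
  proof (induction es)
    case Nil then show ?case by simp
  next
    case (Cons e es)
    show ?case
    proof (intro allI impI)
      fix V :: "'a \<Rightarrow> 'b" assume V: "smooth_fun V"
      have "dd (\<lambda>p. L (V p)) e = (\<lambda>p. L (dd V e p))"
      proof
        fix p
        have "((\<lambda>p. L (V p)) has_derivative (\<lambda>h. L (dd V h p))) (at p)"
          using bounded_linear.has_derivative[OF L smooth_has_derivative[OF V]] .
        then show "dd (\<lambda>p. L (V p)) e p = L (dd V e p)" by (rule dd_unique)
      qed
      then have "iter_dd (e # es) (\<lambda>p. L (V p)) = iter_dd es (\<lambda>p. L (dd V e p))"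
        by (simp only: iter_dd_Cons)
      also have "\<dots> = (\<lambda>p. L (iter_dd es (dd V e) p))"
        using Cons.IH smooth_dd[OF V] by blast
      finally show "iter_dd (e # es) (\<lambda>p. L (V p)) = (\<lambda>p. L (iter_dd (e # es) V p))"
        by (simp only: iter_dd_Cons)
    qed
  qed
  then show ?thesis
    using V unfolding smooth_fun_def differentiable_def
    by (metis bounded_linear.has_derivative[OF L])
qed

lemma chain_vd:
  assumes V: "(V has_derivative (\<lambda>h. dd V h (\<gamma> t))) (at (\<gamma> t))"
    and g: "(\<gamma> has_vector_derivative \<gamma>') (at t)"
  shows "((\<lambda>s. V (\<gamma> s)) has_vector_derivative dd V \<gamma>' (\<gamma> t)) (at t)"
proof -
  have "(V has_derivative (\<lambda>h. dd V h (\<gamma> t))) (at (\<gamma> t) within \<gamma> ` UNIV)"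
    using V by (rule has_derivative_at_withinI)
  from vector_derivative_diff_chain_within[OF g[unfolded at_within_def[symmetric, of _ UNIV]] this]
  show ?thesis by (simp add: o_def)
qed

lemma mixed_bound:
  fixes W :: "'a::real_normed_vector \<Rightarrow> real"
  assumes W: "\<And>q. (W has_derivative (\<lambda>h. dd W h q)) (at q)"
    and G: "(dd W h has_derivative L) (at p)"
    and e: "e > 0"
  shows "\<exists>d>0. \<forall>s. 0 < s \<and> s < d \<longrightarrow>
     \<bar>(W (p + s *\<^sub>R h + s *\<^sub>R k) - W (p + s *\<^sub>R h) - W (p + s *\<^sub>R k) + W p) - s\<^sup>2 * L k\<bar>
        \<le> 2 * e * s\<^sup>2 * (norm h + norm k)"
proof -
  from G[unfolded has_derivative_at_alt] e obtain d0 where d0: "d0 > 0"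
    and R: "\<And>y. norm (y - p) < d0 \<Longrightarrow> norm (dd W h y - dd W h p - L (y - p)) \<le> e * norm (y - p)"
    and L: "bounded_linear L"
    by blast
  define d where "d = d0 / (norm h + norm k + 1)"
  have dpos: "d > 0" using d0 by (simp add: d_def add_nonneg_pos)
  show ?thesis
  proof (intro exI[of _ d] conjI allI impI dpos)
    fix s :: real assume s: "0 < s \<and> s < d"
    define \<phi> where "\<phi> r = W (p + r *\<^sub>R h + s *\<^sub>R k) - W (p + r *\<^sub>R h)" for r
    have der: "(\<phi> has_real_derivative (dd W h (p + r *\<^sub>R h + s *\<^sub>R k) - dd W h (p + r *\<^sub>R h))) (at r)" for r
    proof -
      have l1: "((\<lambda>r. p + r *\<^sub>R h + s *\<^sub>R k) has_vector_derivative h) (at r)"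
        by (auto intro!: derivative_eq_intros)
      have l2: "((\<lambda>r. p + r *\<^sub>R h) has_vector_derivative h) (at r)"
        by (auto intro!: derivative_eq_intros)
      have "((\<lambda>r. W (p + r *\<^sub>R h + s *\<^sub>R k) - W (p + r *\<^sub>R h)) has_vector_derivative
              (dd W h (p + r *\<^sub>R h + s *\<^sub>R k) - dd W h (p + r *\<^sub>R h))) (at r)"
        by (rule has_vector_derivative_diff[OF chain_vd[OF W l1] chain_vd[OF W l2]])
      then show ?thesis unfolding \<phi>_def has_real_derivative_iff_has_vector_derivative .
    qed
    obtain \<theta> where th: "0 < \<theta>" "\<theta> < s" and mv: "\<phi> s - \<phi> 0 = (s - 0) *
        (dd W h (p + \<theta> *\<^sub>R h + s *\<^sub>R k) - dd W h (p + \<theta> *\<^sub>R h))"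
      using MVT2[of 0 s \<phi>, OF _ der] s by auto
    have nh: "norm (\<theta> *\<^sub>R h) \<le> s * (norm h + norm k)"
      using th by (simp add: mult_mono distrib_left add_increasing2)
    have nk: "norm (\<theta> *\<^sub>R h + s *\<^sub>R k) \<le> s * (norm h + norm k)"
    proof -
      have "norm (\<theta> *\<^sub>R h + s *\<^sub>R k) \<le> \<theta> * norm h + s * norm k"
        using th s norm_triangle_ineq[of "\<theta> *\<^sub>R h" "s *\<^sub>R k"] by simp
      also have "\<dots> \<le> s * (norm h + norm k)" using th by (simp add: distrib_left mult_right_mono)
      finally show ?thesis .
    qed
    have sd: "s * (norm h + norm k) < d0"
    proof -
      have "s * (norm h + norm k) \<le> s * (norm h + norm k + 1)" using s by simp
      also have "\<dots> < d * (norm h + norm k + 1)"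
        using s by (intro mult_strict_right_mono) (auto simp: add_nonneg_pos)
      also have "\<dots> = d0" proof -
        have "norm h + norm k + 1 \<noteq> 0" using norm_ge_zero[of h] norm_ge_zero[of k] by linarith
        then show ?thesis unfolding d_def by simp
      qed
      finally show ?thesis .
    qed
    have R1: "\<bar>dd W h (p + \<theta> *\<^sub>R h + s *\<^sub>R k) - dd W h p - L (\<theta> *\<^sub>R h + s *\<^sub>R k)\<bar>
               \<le> e * (s * (norm h + norm k))"
      using R[of "p + \<theta> *\<^sub>R h + s *\<^sub>R k"] nk sd e
      by (simp add: add.assoc) (smt (verit) mult_left_mono)
    have R2: "\<bar>dd W h (p + \<theta> *\<^sub>R h) - dd W h p - L (\<theta> *\<^sub>R h)\<bar> \<le> e * (s * (norm h + norm k))"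
      using R[of "p + \<theta> *\<^sub>R h"] nh sd e
      by simp (smt (verit) mult_left_mono)
    have Lk: "L (\<theta> *\<^sub>R h + s *\<^sub>R k) - L (\<theta> *\<^sub>R h) = s * L k"
      using L by (simp add: linear_add linear_scale bounded_linear.linear)
    have "\<bar>(dd W h (p + \<theta> *\<^sub>R h + s *\<^sub>R k) - dd W h (p + \<theta> *\<^sub>R h)) - s * L k\<bar>
            \<le> 2 * e * (s * (norm h + norm k))"
      using R1 R2 Lk by linarith
    then have "\<bar>s * (dd W h (p + \<theta> *\<^sub>R h + s *\<^sub>R k) - dd W h (p + \<theta> *\<^sub>R h)) - s\<^sup>2 * L k\<bar>
            \<le> s * (2 * e * (s * (norm h + norm k)))"
      using s by (simp add: power2_eq_square abs_mult right_diff_distrib[symmetric] mult.assoc mult_left_mono)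
    moreover have "\<phi> s - \<phi> 0 = W (p + s *\<^sub>R h + s *\<^sub>R k) - W (p + s *\<^sub>R h) - W (p + s *\<^sub>R k) + W p"
      unfolding \<phi>_def by (simp add: add.commute)
    ultimately show "\<bar>(W (p + s *\<^sub>R h + s *\<^sub>R k) - W (p + s *\<^sub>R h) - W (p + s *\<^sub>R k) + W p) - s\<^sup>2 * L k\<bar>
        \<le> 2 * e * s\<^sup>2 * (norm h + norm k)"
      using mv by (simp add: power2_eq_square mult_ac)
  qed
qed

lemma second_sym_real:
  fixes W :: "'a::real_normed_vector \<Rightarrow> real"
  assumes W: "\<And>q. (W has_derivative (\<lambda>h. dd W h q)) (at q)"
    and Gh: "(dd W h has_derivative (\<lambda>k. dd (dd W h) k p)) (at p)"
    and Gk: "(dd W k has_derivative (\<lambda>l. dd (dd W k) l p)) (at p)"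
  shows "dd (dd W h) k p = dd (dd W k) h p"
proof (rule ccontr)
  define A where "A = dd (dd W h) k p"
  define B where "B = dd (dd W k) h p"
  assume "dd (dd W h) k p \<noteq> dd (dd W k) h p"
  then have ne: "A \<noteq> B" unfolding A_def B_def .
  define K where "K = norm h + norm k"
  have K0: "K \<ge> 0" unfolding K_def by simp
  define e where "e = \<bar>A - B\<bar> / (8 * (K + 1))"
  have e: "e > 0" unfolding e_def using ne K0 by (simp add: add_nonneg_pos)
  obtain d1 where d1: "d1 > 0" and b1: "\<And>s. 0 < s \<and> s < d1 \<Longrightarrow>
     \<bar>(W (p + s *\<^sub>R h + s *\<^sub>R k) - W (p + s *\<^sub>R h) - W (p + s *\<^sub>R k) + W p) - s\<^sup>2 * A\<bar>
        \<le> 2 * e * s\<^sup>2 * K"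
    using mixed_bound[OF W Gh e, of k] unfolding A_def K_def by blast
  obtain d2 where d2: "d2 > 0" and b2: "\<And>s. 0 < s \<and> s < d2 \<Longrightarrow>
     \<bar>(W (p + s *\<^sub>R k + s *\<^sub>R h) - W (p + s *\<^sub>R k) - W (p + s *\<^sub>R h) + W p) - s\<^sup>2 * B\<bar>
        \<le> 2 * e * s\<^sup>2 * K"
    using mixed_bound[OF W Gk e, of h] unfolding B_def K_def by (auto simp: add.commute)
  define s where "s = min d1 d2 / 2"
  have s: "0 < s" "s < d1" "s < d2" using d1 d2 unfolding s_def by auto
  have eq: "p + s *\<^sub>R k + s *\<^sub>R h = p + s *\<^sub>R h + s *\<^sub>R k" by (simp add: algebra_simps)
  have c1: "\<bar>(W (p + s *\<^sub>R h + s *\<^sub>R k) - W (p + s *\<^sub>R h) - W (p + s *\<^sub>R k) + W p) - s\<^sup>2 * A\<bar>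
        \<le> 2 * e * s\<^sup>2 * K" using b1 s by blast
  have c2: "\<bar>(W (p + s *\<^sub>R h + s *\<^sub>R k) - W (p + s *\<^sub>R k) - W (p + s *\<^sub>R h) + W p) - s\<^sup>2 * B\<bar>
        \<le> 2 * e * s\<^sup>2 * K" using b2[of s] s unfolding eq by blast
  have "\<bar>s\<^sup>2 * A - s\<^sup>2 * B\<bar> \<le> 4 * e * s\<^sup>2 * K"
    using c1 c2 by arith
  then have "s\<^sup>2 * \<bar>A - B\<bar> \<le> s\<^sup>2 * (4 * e * K)"
    by (simp add: left_diff_distrib[symmetric] right_diff_distrib[symmetric] abs_mult mult_ac)
  then have "\<bar>A - B\<bar> \<le> 4 * e * K" using s by (simp add: power2_eq_square)
  also have "\<dots> = \<bar>A - B\<bar> * (K / (2 * (K + 1)))" unfolding e_def using K0 by (simp add: field_simps)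
  also have "\<dots> < \<bar>A - B\<bar>" using ne K0 by (simp add: field_simps add_nonneg_pos)
  finally show False by simp
qed

lemma inner_ext: "(\<And>e. inner e (x::'a::real_inner) = inner e y) \<Longrightarrow> x = y"
  by (metis inner_diff_right inner_eq_zero_iff right_minus_eq)

lemma dd_inner:
  assumes "smooth_fun V"
  shows "dd (\<lambda>q. inner e (V q)) h p = inner e (dd V h p)"
  using bounded_linear.has_derivative[OF bounded_linear_inner_right smooth_has_derivative[OF assms]]
  by (rule dd_unique)

lemma second_sym:
  fixes V :: "'a::real_normed_vector \<Rightarrow> 'b::real_inner"
  assumes V: "smooth_fun V"
  shows "dd (dd V h) k p = dd (dd V k) h p"
proof (rule inner_ext)
  fix e
  define W where "W = (\<lambda>q. inner e (V q))"
  have Ws: "smooth_fun W" unfolding W_def by (rule smooth_blin[OF bounded_linear_inner_right V])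
  have dW: "dd W h = (\<lambda>q. inner e (dd V h q))" for h
    unfolding W_def using dd_inner[OF V] by blast
  have ddW: "dd (dd W h) k p = inner e (dd (dd V h) k p)" for h k
    unfolding dW using dd_inner[OF smooth_dd[OF V]] by blast
  have "dd (dd W h) k p = dd (dd W k) h p"
    by (rule second_sym_real[OF smooth_has_derivative[OF Ws] smooth_has_derivative[OF smooth_dd[OF Ws]]
          smooth_has_derivative[OF smooth_dd[OF Ws]]])
  then show "inner e (dd (dd V h) k p) = inner e (dd (dd V k) h p)" using ddW by simp
qed

lemma dd_expand:
  fixes V :: "'a::euclidean_space \<Rightarrow> 'b::real_normed_vector"
  assumes "smooth_fun V"
  shows "dd V h p = (\<Sum>b\<in>Basis. (inner h b) *\<^sub>R dd V b p)"
proof -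
  have "dd V h p = dd V (\<Sum>b\<in>Basis. (inner h b) *\<^sub>R b) p" by (simp add: euclidean_representation)
  also have "\<dots> = (\<Sum>b\<in>Basis. (inner h b) *\<^sub>R dd V b p)"
    using assms by (simp add: dd_sum dd_scale)
  finally show ?thesis .
qed

lemma dd_lincomb:
  assumes "\<And>b. b \<in> S \<Longrightarrow> smooth_fun (W b)"
  shows "dd (\<lambda>q. \<Sum>b\<in>S. c b *\<^sub>R W b q) l p = (\<Sum>b\<in>S. c b *\<^sub>R dd (W b) l p)"
proof -
  have "((\<lambda>q. \<Sum>b\<in>S. c b *\<^sub>R W b q) has_derivative (\<lambda>l. \<Sum>b\<in>S. c b *\<^sub>R dd (W b) l p)) (at p)"
    by (intro has_derivative_sum bounded_linear.has_derivative[OF bounded_linear_scaleR_right]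
        smooth_has_derivative assms)
  then show ?thesis by (rule dd_unique)
qed

lemma dd_dd_expand:
  fixes V :: "'a::euclidean_space \<Rightarrow> 'b::real_normed_vector"
  assumes V: "smooth_fun V"
  shows "dd (dd V h) l p = (\<Sum>b\<in>Basis. (inner h b) *\<^sub>R dd (dd V b) l p)"
proof -
  have "dd V h = (\<lambda>q. \<Sum>b\<in>Basis. (inner h b) *\<^sub>R dd V b q)"
    using dd_expand[OF V] by blast
  then show ?thesis using dd_lincomb[of Basis "\<lambda>b. dd V b" "\<lambda>b. inner h b" l p] smooth_dd[OF V] by simp
qed

lemma chain_vd2:
  fixes V :: "'a::euclidean_space \<Rightarrow> 'b::real_normed_vector"
  assumes V: "smooth_fun V"
    and hd: "(hc has_vector_derivative h') (at t)"
    and gd: "(\<gamma> has_vector_derivative \<gamma>') (at t)"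
  shows "((\<lambda>s. dd V (hc s) (\<gamma> s)) has_vector_derivative
           (dd V h' (\<gamma> t) + dd (dd V (hc t)) \<gamma>' (\<gamma> t))) (at t)"
proof -
  have eq: "(\<lambda>s. dd V (hc s) (\<gamma> s)) = (\<lambda>s. \<Sum>b\<in>Basis. (inner (hc s) b) *\<^sub>R dd V b (\<gamma> s))"
    using dd_expand[OF V] by blast
  have "((\<lambda>s. \<Sum>b\<in>Basis. (inner (hc s) b) *\<^sub>R dd V b (\<gamma> s)) has_vector_derivative
      (\<Sum>b\<in>Basis. (inner (hc t) b) *\<^sub>R dd (dd V b) \<gamma>' (\<gamma> t) + (inner h' b) *\<^sub>R dd V b (\<gamma> t))) (at t)"
  proof (intro has_vector_derivative_sum has_vector_derivative_scaleR)
    fix b :: 'a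
    show "((\<lambda>s. inner (hc s) b) has_real_derivative inner h' b) (at t)"
      unfolding has_real_derivative_iff_has_vector_derivative
      by (rule bounded_linear.has_vector_derivative[OF bounded_linear_inner_left hd])
    show "((\<lambda>s. dd V b (\<gamma> s)) has_vector_derivative dd (dd V b) \<gamma>' (\<gamma> t)) (at t)"
      by (rule chain_vd[OF smooth_has_derivative[OF smooth_dd[OF V]] gd])
  qed
  moreover have "(\<Sum>b\<in>Basis. (inner (hc t) b) *\<^sub>R dd (dd V b) \<gamma>' (\<gamma> t) + (inner h' b) *\<^sub>R dd V b (\<gamma> t))
      = dd V h' (\<gamma> t) + dd (dd V (hc t)) \<gamma>' (\<gamma> t)"
    using dd_expand[OF V, of h'] dd_dd_expand[OF V, of "hc t"] by (simp add: sum.distrib add.commute)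
  ultimately show ?thesis unfolding eq by simp
qed

lemma chain_vd3:
  fixes V :: "'a::euclidean_space \<Rightarrow> 'b::real_normed_vector"
  assumes V: "smooth_fun V"
    and hd: "(hc has_vector_derivative h') (at t)"
    and kd: "(kc has_vector_derivative k') (at t)"
    and gd: "(\<gamma> has_vector_derivative \<gamma>') (at t)"
  shows "((\<lambda>s. dd (dd V (hc s)) (kc s) (\<gamma> s)) has_vector_derivative
           (dd (dd V h') (kc t) (\<gamma> t) + dd (dd V (hc t)) k' (\<gamma> t) + dd (dd (dd V (hc t)) (kc t)) \<gamma>' (\<gamma> t))) (at t)"
proof -
  have eq: "(\<lambda>s. dd (dd V (hc s)) (kc s) (\<gamma> s)) = (\<lambda>s. \<Sum>b\<in>Basis. (inner (hc s) b) *\<^sub>R dd (dd V b) (kc s) (\<gamma> s))"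
    using dd_dd_expand[OF V] by blast
  have "((\<lambda>s. \<Sum>b\<in>Basis. (inner (hc s) b) *\<^sub>R dd (dd V b) (kc s) (\<gamma> s)) has_vector_derivative
      (\<Sum>b\<in>Basis. (inner (hc t) b) *\<^sub>R (dd (dd V b) k' (\<gamma> t) + dd (dd (dd V b) (kc t)) \<gamma>' (\<gamma> t))
          + (inner h' b) *\<^sub>R dd (dd V b) (kc t) (\<gamma> t))) (at t)"
  proof (intro has_vector_derivative_sum has_vector_derivative_scaleR)
    fix b :: 'a
    show "((\<lambda>s. inner (hc s) b) has_real_derivative inner h' b) (at t)"
      unfolding has_real_derivative_iff_has_vector_derivative
      by (rule bounded_linear.has_vector_derivative[OF bounded_linear_inner_left hd])
    show "((\<lambda>s. dd (dd V b) (kc s) (\<gamma> s)) has_vector_derivative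
         dd (dd V b) k' (\<gamma> t) + dd (dd (dd V b) (kc t)) \<gamma>' (\<gamma> t)) (at t)"
      by (rule chain_vd2[OF smooth_dd[OF V] kd gd])
  qed
  moreover have "(\<Sum>b\<in>Basis. (inner (hc t) b) *\<^sub>R (dd (dd V b) k' (\<gamma> t) + dd (dd (dd V b) (kc t)) \<gamma>' (\<gamma> t))
          + (inner h' b) *\<^sub>R dd (dd V b) (kc t) (\<gamma> t))
      = dd (dd V h') (kc t) (\<gamma> t) + dd (dd V (hc t)) k' (\<gamma> t) + dd (dd (dd V (hc t)) (kc t)) \<gamma>' (\<gamma> t)"
  proof -
    have a: "dd (dd V h') (kc t) (\<gamma> t) = (\<Sum>b\<in>Basis. (inner h' b) *\<^sub>R dd (dd V b) (kc t) (\<gamma> t))"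
      by (rule dd_dd_expand[OF V])
    have b: "dd (dd V (hc t)) k' (\<gamma> t) = (\<Sum>b\<in>Basis. (inner (hc t) b) *\<^sub>R dd (dd V b) k' (\<gamma> t))"
      by (rule dd_dd_expand[OF V])
    have "dd V (hc t) = (\<lambda>q. \<Sum>b\<in>Basis. (inner (hc t) b) *\<^sub>R dd V b q)"
      using dd_expand[OF V] by blast
    then have "dd (dd V (hc t)) (kc t) = (\<lambda>q. \<Sum>b\<in>Basis. (inner (hc t) b) *\<^sub>R dd (dd V b) (kc t) q)"
      using dd_lincomb[of Basis "\<lambda>b. dd V b" "\<lambda>b. inner (hc t) b" "kc t"] smooth_dd[OF V] by auto
    then have c: "dd (dd (dd V (hc t)) (kc t)) \<gamma>' (\<gamma> t) = (\<Sum>b\<in>Basis. (inner (hc t) b) *\<^sub>R dd (dd (dd V b) (kc t)) \<gamma>' (\<gamma> t))"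
      using dd_lincomb[of Basis "\<lambda>b. dd (dd V b) (kc t)" "\<lambda>b. inner (hc t) b" "\<gamma>'"] smooth_dd[OF smooth_dd[OF V]] by auto
    show ?thesis unfolding a b c by (simp add: sum.distrib scaleR_add_right algebra_simps)
  qed
  ultimately show ?thesis unfolding eq by simp
qed

definition linBf :: "real \<Rightarrow> real^'n \<Rightarrow> real^'n \<Rightarrow> real^'n \<Rightarrow> real^'n \<Rightarrow> real^'n \<Rightarrow> real^'n \<Rightarrow> real^'n" where
  "linBf c v a b e1 e2 e3 = e3 + (3 * (v \<bullet> a) / (c\<^sup>2 - v \<bullet> v)) *\<^sub>R e2
     + (3 * ((e1 \<bullet> a + v \<bullet> e2) * (c\<^sup>2 - v \<bullet> v) + (v \<bullet> a) * (2 * (v \<bullet> e1))) / (c\<^sup>2 - v \<bullet> v)\<^sup>2) *\<^sub>R a"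

lemma inner_vd:
  assumes "(f has_vector_derivative f') (at x)" "(g has_vector_derivative g') (at x)"
  shows "((\<lambda>s. inner (f s) (g s)) has_real_derivative (inner (f x) g' + inner f' (g x))) (at x)"
  unfolding has_real_derivative_iff_has_vector_derivative
  by (rule bounded_bilinear.has_vector_derivative[OF bounded_bilinear_inner assms])

lemma linB_eq:
  assumes w: "c\<^sup>2 - v \<bullet> v \<noteq> 0"
  shows "linB c v a b e1 e2 e3 = linBf c v a b e1 e2 e3"
proof -
  have l1: "((\<lambda>s. v + s *\<^sub>R e1) has_vector_derivative e1) (at 0)"
    by (auto intro!: derivative_eq_intros)
  have l2: "((\<lambda>s. a + s *\<^sub>R e2) has_vector_derivative e2) (at 0)"
    by (auto intro!: derivative_eq_intros)
  have l3: "((\<lambda>s. b + s *\<^sub>R e3) has_vector_derivative e3) (at 0)"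
    by (auto intro!: derivative_eq_intros)
  have n: "((\<lambda>s. 3 * ((v + s *\<^sub>R e1) \<bullet> (a + s *\<^sub>R e2))) has_real_derivative 3 * (v \<bullet> e2 + e1 \<bullet> a)) (at 0)"
    using DERIV_cmult[OF inner_vd[OF l1 l2], of 3] by simp
  have d: "((\<lambda>s. c\<^sup>2 - (v + s *\<^sub>R e1) \<bullet> (v + s *\<^sub>R e1)) has_real_derivative - (v \<bullet> e1 + e1 \<bullet> v)) (at 0)"
    using DERIV_diff[OF DERIV_const inner_vd[OF l1 l1]] by simp
  have q: "((\<lambda>s. 3 * ((v + s *\<^sub>R e1) \<bullet> (a + s *\<^sub>R e2)) / (c\<^sup>2 - (v + s *\<^sub>R e1) \<bullet> (v + s *\<^sub>R e1)))
     has_real_derivative ((3 * (v \<bullet> e2 + e1 \<bullet> a)) * (c\<^sup>2 - v \<bullet> v) - 3 * (v \<bullet> a) * (- (v \<bullet> e1 + e1 \<bullet> v)))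
        / ((c\<^sup>2 - v \<bullet> v) * (c\<^sup>2 - v \<bullet> v))) (at 0)"
    using DERIV_divide[OF n d] w by simp
  have "((\<lambda>s. Bsys c (v + s *\<^sub>R e1) (a + s *\<^sub>R e2) (b + s *\<^sub>R e3)) has_vector_derivative
          (e3 + ((3 * (v \<bullet> a) / (c\<^sup>2 - v \<bullet> v)) *\<^sub>R e2 + (((3 * (v \<bullet> e2 + e1 \<bullet> a)) * (c\<^sup>2 - v \<bullet> v) - 3 * (v \<bullet> a) * (- (v \<bullet> e1 + e1 \<bullet> v)))
        / ((c\<^sup>2 - v \<bullet> v) * (c\<^sup>2 - v \<bullet> v))) *\<^sub>R a))) (at 0)"
    unfolding Bsys_def
    using has_vector_derivative_add[OF l3 has_vector_derivative_scaleR[OF q l2]] by simp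
  moreover have "e3 + ((3 * (v \<bullet> a) / (c\<^sup>2 - v \<bullet> v)) *\<^sub>R e2 + (((3 * (v \<bullet> e2 + e1 \<bullet> a)) * (c\<^sup>2 - v \<bullet> v) - 3 * (v \<bullet> a) * (- (v \<bullet> e1 + e1 \<bullet> v)))
        / ((c\<^sup>2 - v \<bullet> v) * (c\<^sup>2 - v \<bullet> v))) *\<^sub>R a) = linBf c v a b e1 e2 e3"
  proof -
    have "((3 * (v \<bullet> e2 + e1 \<bullet> a)) * (c\<^sup>2 - v \<bullet> v) - 3 * (v \<bullet> a) * (- (v \<bullet> e1 + e1 \<bullet> v)))
        / ((c\<^sup>2 - v \<bullet> v) * (c\<^sup>2 - v \<bullet> v)) = 3 * ((e1 \<bullet> a + v \<bullet> e2) * (c\<^sup>2 - v \<bullet> v) + (v \<bullet> a) * (2 * (v \<bullet> e1))) / (c\<^sup>2 - v \<bullet> v)\<^sup>2"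
      by (simp add: inner_commute[of e1 v] power2_eq_square ring_distribs)
    then show ?thesis unfolding linBf_def by (simp only: add.assoc)
  qed
  ultimately have D: "((\<lambda>s. Bsys c (v + s *\<^sub>R e1) (a + s *\<^sub>R e2) (b + s *\<^sub>R e3)) has_vector_derivative
          linBf c v a b e1 e2 e3) (at 0)" by (simp only:)
  show ?thesis unfolding linB_def by (rule vector_derivative_at[OF D])
qed

definition bq :: "real \<Rightarrow> real^'n \<Rightarrow> real^'n \<Rightarrow> real^'n" where
  "bq c v a = (-3 * (v \<bullet> a) / (c\<^sup>2 - v \<bullet> v)) *\<^sub>R a"

definition bpq :: "real \<Rightarrow> real^'n \<Rightarrow> real^'n \<Rightarrow> real^'n" where
  "bpq c v a = (-3 * ((a \<bullet> a + v \<bullet> bq c v a) * (c\<^sup>2 - v \<bullet> v) + (v \<bullet> a) * (2 * (v \<bullet> a))) / (c\<^sup>2 - v \<bullet> v)\<^sup>2) *\<^sub>R a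
      + (-3 * (v \<bullet> a) / (c\<^sup>2 - v \<bullet> v)) *\<^sub>R bq c v a"

definition PhiG :: "real \<Rightarrow> real^'n \<Rightarrow> real^'n \<Rightarrow> real \<Rightarrow> real \<times> (real^'n) \<Rightarrow> real \<times> (real^'n) \<Rightarrow> real \<times> (real^'n) \<Rightarrow> real^'n" where
  "PhiG c v a f G1 G2 G3 = linBf c v a (bq c v a)
     (snd G1 - fst G1 *\<^sub>R v - f *\<^sub>R a)
     (snd G2 - fst G2 *\<^sub>R v - (2 * fst G1) *\<^sub>R a - f *\<^sub>R bq c v a)
     (snd G3 - fst G3 *\<^sub>R v - (3 * fst G2) *\<^sub>R a - (3 * fst G1) *\<^sub>R bq c v a - f *\<^sub>R bpq c v a)"

definition PhiV :: "real \<Rightarrow> (real \<times> (real^'n) \<Rightarrow> real \<times> (real^'n)) \<Rightarrow> real \<times> (real^'n) \<Rightarrow> real^'n \<Rightarrow> real^'n \<Rightarrow> real^'n" where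
  "PhiV c V p v a = PhiG c v a (fst (V p)) (dd V (1, v) p)
      (dd V (0, a) p + dd (dd V (1, v)) (1, v) p)
      (dd V (0, bq c v a) p + dd (dd V (0, a)) (1, v) p
        + (dd (dd V (0, a)) (1, v) p + dd (dd V (1, v)) (0, a) p + dd (dd (dd V (1, v)) (1, v)) (1, v) p))"

lemma vd_at: "(f has_vector_derivative f') (at t) \<Longrightarrow> vd f t = f'"
  unfolding vd_def by (rule vector_derivative_at)

lemma vd_transform:
  assumes "open I" "t \<in> I" "\<And>s. s \<in> I \<Longrightarrow> vd f s = g s" "(g has_vector_derivative g') (at t)"
  shows "(vd f has_vector_derivative g') (at t)"
  using has_vector_derivative_transform_within_open[OF assms(4,1,2)] assms(3) by metis

lemma fst_vd: "(f has_vector_derivative f') F \<Longrightarrow> ((\<lambda>s. fst (f s)) has_real_derivative fst f') F"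
  unfolding has_real_derivative_iff_has_vector_derivative
  by (rule bounded_linear.has_vector_derivative[OF bounded_linear_fst])
lemma snd_vd: "(f has_vector_derivative f') F \<Longrightarrow> ((\<lambda>s. snd (f s)) has_vector_derivative snd f') F"
  by (rule bounded_linear.has_vector_derivative[OF bounded_linear_snd])

lemma sol_Phi:
  fixes V :: "real \<times> (real^'n) \<Rightarrow> real \<times> (real^'n)" and x :: "real \<Rightarrow> real^'n"
  assumes V: "smooth_fun V" and sol: "is_solution c I x" and t: "t \<in> I"
  defines "\<delta> \<equiv> (\<lambda>t. snd (V (t, x t)) - fst (V (t, x t)) *\<^sub>R vd x t)"
  shows "linB c (vd x t) ((vd ^^ 2) x t) ((vd ^^ 3) x t) (vd \<delta> t) ((vd ^^ 2) \<delta> t) ((vd ^^ 3) \<delta> t)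
       = PhiV c V (t, x t) (vd x t) ((vd ^^ 2) x t)"
proof -
  define X where "X k = (vd ^^ k) x" for k
  have I: "open I" using sol unfolding is_solution_def by blast
  have XD: "\<And>k s. s \<in> I \<Longrightarrow> (X k has_vector_derivative X (Suc k) s) (at s)"
    using sol unfolding is_solution_def smooth_curve_on_def X_def by blast
  have X0: "X 0 = x" and X1: "X 1 = vd x" and X2: "X 2 = (vd ^^ 2) x" and X3: "X 3 = (vd ^^ 3) x"
    by (simp_all add: X_def)
  have nv: "\<And>s. s \<in> I \<Longrightarrow> norm (X 1 s) < c" using sol unfolding is_solution_def X1 by blast
  have Bz: "\<And>s. s \<in> I \<Longrightarrow> Bsys c (X 1 s) (X 2 s) (X 3 s) = 0"
    using sol unfolding is_solution_def X1 X2 X3 by blast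
  have wnz: "c\<^sup>2 - X 1 s \<bullet> X 1 s \<noteq> 0" if "s \<in> I" for s
  proof -
    have "norm (X 1 s) < c" using nv that .
    then have "(norm (X 1 s))\<^sup>2 < c\<^sup>2" by (smt (verit) norm_ge_zero power_strict_mono zero_less_numeral)
    then show ?thesis by (simp add: power2_norm_eq_inner)
  qed
  define q where "q s = -3 * (X 1 s \<bullet> X 2 s) / (c\<^sup>2 - X 1 s \<bullet> X 1 s)" for s
  have X3q: "X 3 s = q s *\<^sub>R X 2 s" if "s \<in> I" for s
  proof -
    have "X 3 s = - ((3 * (X 1 s \<bullet> X 2 s) / (c\<^sup>2 - X 1 s \<bullet> X 1 s)) *\<^sub>R X 2 s)"
      using Bz[OF that] unfolding Bsys_def by (simp add: eq_neg_iff_add_eq_0)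
    also have "\<dots> = q s *\<^sub>R X 2 s" unfolding q_def by simp
    finally show ?thesis .
  qed
  define q' where "q' = -3 * ((X 2 t \<bullet> X 2 t + X 1 t \<bullet> X 3 t) * (c\<^sup>2 - X 1 t \<bullet> X 1 t) + (X 1 t \<bullet> X 2 t) * (2 * (X 1 t \<bullet> X 2 t))) / (c\<^sup>2 - X 1 t \<bullet> X 1 t)\<^sup>2"
  have qD: "(q has_real_derivative q') (at t)"
  proof -
    have n: "((\<lambda>s. -3 * (X 1 s \<bullet> X 2 s)) has_real_derivative -3 * (X 1 t \<bullet> X 3 t + X 2 t \<bullet> X 2 t)) (at t)"
      using DERIV_cmult[OF inner_vd[OF XD[OF t, of 1] XD[OF t, of 2]], of "-3"] by (simp add: numeral_eq_Suc)
    have d: "((\<lambda>s. c\<^sup>2 - X 1 s \<bullet> X 1 s) has_real_derivative - (X 1 t \<bullet> X 2 t + X 2 t \<bullet> X 1 t)) (at t)"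
      using DERIV_diff[OF DERIV_const inner_vd[OF XD[OF t, of 1] XD[OF t, of 1]]] by (simp add: numeral_eq_Suc)
    show ?thesis unfolding q_def
    proof (rule DERIV_cong[OF DERIV_divide[OF n d wnz[OF t]]])
      show "(-3 * (X 1 t \<bullet> X 3 t + X 2 t \<bullet> X 2 t) * (c\<^sup>2 - X 1 t \<bullet> X 1 t) -
          -3 * (X 1 t \<bullet> X 2 t) * - (X 1 t \<bullet> X 2 t + X 2 t \<bullet> X 1 t)) /
          ((c\<^sup>2 - X 1 t \<bullet> X 1 t) * (c\<^sup>2 - X 1 t \<bullet> X 1 t)) = q'"
        unfolding q'_def by (simp add: power2_eq_square algebra_simps inner_commute)
    qed
  qed
  have X4: "X 4 t = q' *\<^sub>R X 2 t + q t *\<^sub>R X 3 t"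
  proof -
    have "((\<lambda>s. q s *\<^sub>R X 2 s) has_vector_derivative q t *\<^sub>R X 3 t + q' *\<^sub>R X 2 t) (at t)"
      using has_vector_derivative_scaleR[OF qD XD[OF t, of 2]] by (simp add: numeral_eq_Suc)
    then have "(X 3 has_vector_derivative q t *\<^sub>R X 3 t + q' *\<^sub>R X 2 t) (at t)"
      using has_vector_derivative_transform_within_open[OF _ I t, of "\<lambda>s. q s *\<^sub>R X 2 s" _ "X 3"] X3q by metis
    moreover have "(X 3 has_vector_derivative X 4 t) (at t)" using XD[OF t, of 3] by (simp add: numeral_eq_Suc)
    ultimately show ?thesis using vector_derivative_unique_at by (metis add.commute)
  qed
  have XD0: "(x has_vector_derivative X 1 s) (at s)" if "s \<in> I" for s using XD[OF that, of 0] X0 by simp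
  have XD1: "(X 1 has_vector_derivative X 2 s) (at s)" if "s \<in> I" for s using XD[OF that, of 1] by (simp add: numeral_eq_Suc)
  have XD2: "(X 2 has_vector_derivative X 3 s) (at s)" if "s \<in> I" for s using XD[OF that, of 2] by (simp add: numeral_eq_Suc)
  define \<gamma> where "\<gamma> s = (s, x s)" for s
  define \<Gamma>1 where "\<Gamma>1 s = (1::real, X 1 s)" for s
  define \<Gamma>2 where "\<Gamma>2 s = (0::real, X 2 s)" for s
  define \<Gamma>3 where "\<Gamma>3 s = (0::real, X 3 s)" for s
  have \<gamma>D: "(\<gamma> has_vector_derivative \<Gamma>1 s) (at s)" if "s \<in> I" for s
    unfolding \<gamma>_def \<Gamma>1_def by (intro has_vector_derivative_Pair has_vector_derivative_id XD0 that)
  have \<Gamma>1D: "(\<Gamma>1 has_vector_derivative \<Gamma>2 s) (at s)" if "s \<in> I" for s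
    unfolding \<Gamma>1_def \<Gamma>2_def by (intro has_vector_derivative_Pair has_vector_derivative_const XD1 that)
  have \<Gamma>2D: "(\<Gamma>2 has_vector_derivative \<Gamma>3 s) (at s)" if "s \<in> I" for s
    unfolding \<Gamma>2_def \<Gamma>3_def by (intro has_vector_derivative_Pair has_vector_derivative_const XD2 that)
  define g1 where "g1 s = dd V (\<Gamma>1 s) (\<gamma> s)" for s
  define g2 where "g2 s = dd V (\<Gamma>2 s) (\<gamma> s) + dd (dd V (\<Gamma>1 s)) (\<Gamma>1 s) (\<gamma> s)" for s
  define g3 where "g3 s = (dd V (\<Gamma>3 s) (\<gamma> s) + dd (dd V (\<Gamma>2 s)) (\<Gamma>1 s) (\<gamma> s)) +
     (dd (dd V (\<Gamma>2 s)) (\<Gamma>1 s) (\<gamma> s) + dd (dd V (\<Gamma>1 s)) (\<Gamma>2 s) (\<gamma> s) + dd (dd (dd V (\<Gamma>1 s)) (\<Gamma>1 s)) (\<Gamma>1 s) (\<gamma> s))" for s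
  have VD: "((\<lambda>s. V (\<gamma> s)) has_vector_derivative g1 s) (at s)" if "s \<in> I" for s
    unfolding g1_def by (rule chain_vd[OF smooth_has_derivative[OF V] \<gamma>D[OF that]])
  have g1D: "(g1 has_vector_derivative g2 s) (at s)" if "s \<in> I" for s
    unfolding g1_def g2_def
    using chain_vd2[OF V \<Gamma>1D[OF that] \<gamma>D[OF that]] by (simp add: add.commute)
  have g2D: "(g2 has_vector_derivative g3 s) (at s)" if "s \<in> I" for s
    unfolding g2_def[abs_def] g3_def
    by (rule has_vector_derivative_add[OF chain_vd2[OF V \<Gamma>2D[OF that] \<gamma>D[OF that]]
          chain_vd3[OF V \<Gamma>1D[OF that] \<Gamma>1D[OF that] \<gamma>D[OF that]]])
  have \<delta>eq: "\<delta> = (\<lambda>s. snd (V (\<gamma> s)) - fst (V (\<gamma> s)) *\<^sub>R X 1 s)"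
    unfolding \<delta>_def \<gamma>_def X1 ..
  define \<delta>1 where "\<delta>1 s = snd (g1 s) - (fst (V (\<gamma> s)) *\<^sub>R X 2 s + fst (g1 s) *\<^sub>R X 1 s)" for s
  define \<delta>2 where "\<delta>2 s = snd (g2 s) - ((fst (V (\<gamma> s)) *\<^sub>R X 3 s + fst (g1 s) *\<^sub>R X 2 s)
      + (fst (g1 s) *\<^sub>R X 2 s + fst (g2 s) *\<^sub>R X 1 s))" for s
  define \<delta>3 where "\<delta>3 s = snd (g3 s) - (((fst (V (\<gamma> s)) *\<^sub>R X 4 s + fst (g1 s) *\<^sub>R X 3 s) + (fst (g1 s) *\<^sub>R X 3 s + fst (g2 s) *\<^sub>R X 2 s))
      + ((fst (g1 s) *\<^sub>R X 3 s + fst (g2 s) *\<^sub>R X 2 s) + (fst (g2 s) *\<^sub>R X 2 s + fst (g3 s) *\<^sub>R X 1 s)))" for s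
  have D0: "(\<delta> has_vector_derivative \<delta>1 s) (at s)" if "s \<in> I" for s
    unfolding \<delta>eq \<delta>1_def
    by (intro has_vector_derivative_diff snd_vd has_vector_derivative_scaleR fst_vd VD XD1 that)
  have D1: "(\<delta>1 has_vector_derivative \<delta>2 s) (at s)" if "s \<in> I" for s
    unfolding \<delta>1_def[abs_def] \<delta>2_def
    by (intro has_vector_derivative_diff has_vector_derivative_add snd_vd has_vector_derivative_scaleR fst_vd VD XD1 XD2 g1D that)
  have XD3: "(X 3 has_vector_derivative X 4 t) (at t)" using XD[OF t, of 3] by (simp add: numeral_eq_Suc)
  have D2: "(\<delta>2 has_vector_derivative \<delta>3 t) (at t)"
    unfolding \<delta>2_def[abs_def] \<delta>3_def
    by (intro has_vector_derivative_diff has_vector_derivative_add snd_vd has_vector_derivative_scaleR fst_vd VD XD1 XD2 XD3 g1D g2D t)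
  have v1: "vd \<delta> s = \<delta>1 s" if "s \<in> I" for s using vd_at[OF D0[OF that]] .
  have v2: "vd (vd \<delta>) s = \<delta>2 s" if "s \<in> I" for s
    using vd_at[OF vd_transform[OF I that v1 D1[OF that]]] .
  have v3: "vd (vd (vd \<delta>)) t = \<delta>3 t"
    using vd_at[OF vd_transform[OF I t v2 D2]] .
  have fun3: "(vd ^^ 3) \<delta> = vd (vd (vd \<delta>))" "(vd ^^ 2) \<delta> = vd (vd \<delta>)"
    by (simp_all add: numeral_eq_Suc)
  have bq: "bq c (X 1 t) (X 2 t) = X 3 t" unfolding bq_def X3q[OF t] q_def ..
  have bpq: "bpq c (X 1 t) (X 2 t) = X 4 t" unfolding bpq_def bq X4 q'_def X3q[OF t] q_def ..
  have LHS: "linB c (vd x t) ((vd ^^ 2) x t) ((vd ^^ 3) x t) (vd \<delta> t) ((vd ^^ 2) \<delta> t) ((vd ^^ 3) \<delta> t)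
     = linBf c (X 1 t) (X 2 t) (X 3 t) (\<delta>1 t) (\<delta>2 t) (\<delta>3 t)"
    unfolding fun3 v1[OF t] v2[OF t] v3 X1[symmetric] X2[symmetric] X3[symmetric]
    by (rule linB_eq[OF wnz[OF t]])
  have G: "\<gamma> t = (t, x t)" "\<Gamma>1 t = (1, X 1 t)" "\<Gamma>2 t = (0, X 2 t)" "\<Gamma>3 t = (0, bq c (X 1 t) (X 2 t))"
    unfolding \<gamma>_def \<Gamma>1_def \<Gamma>2_def \<Gamma>3_def bq by simp_all
  have RHS: "PhiV c V (t, x t) (X 1 t) (X 2 t) = linBf c (X 1 t) (X 2 t) (X 3 t) (\<delta>1 t) (\<delta>2 t) (\<delta>3 t)"
  proof -
    have "PhiV c V (t, x t) (X 1 t) (X 2 t) = PhiG c (X 1 t) (X 2 t) (fst (V (\<gamma> t))) (g1 t) (g2 t) (g3 t)"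
      unfolding PhiV_def g1_def g2_def g3_def G ..
    also have "\<dots> = linBf c (X 1 t) (X 2 t) (X 3 t) (\<delta>1 t) (\<delta>2 t) (\<delta>3 t)"
    proof -
      have e1: "snd (g1 t) - fst (g1 t) *\<^sub>R X 1 t - fst (V (\<gamma> t)) *\<^sub>R X 2 t = \<delta>1 t"
        unfolding \<delta>1_def by (simp add: algebra_simps)
      have e2: "snd (g2 t) - fst (g2 t) *\<^sub>R X 1 t - (2 * fst (g1 t)) *\<^sub>R X 2 t - fst (V (\<gamma> t)) *\<^sub>R X 3 t = \<delta>2 t"
        unfolding \<delta>2_def by (simp add: vec_eq_iff algebra_simps)
      have e3: "snd (g3 t) - fst (g3 t) *\<^sub>R X 1 t - (3 * fst (g2 t)) *\<^sub>R X 2 t - (3 * fst (g1 t)) *\<^sub>R X 3 t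
          - fst (V (\<gamma> t)) *\<^sub>R X 4 t = \<delta>3 t"
        unfolding \<delta>3_def by (simp add: vec_eq_iff algebra_simps)
      show ?thesis unfolding PhiG_def bq bpq e1 e2 e3 ..
    qed
    finally show ?thesis .
  qed
  have RHS': "PhiV c V (t, x t) (vd x t) ((vd ^^ 2) x t) = linBf c (X 1 t) (X 2 t) (X 3 t) (\<delta>1 t) (\<delta>2 t) (\<delta>3 t)"
    using RHS unfolding X1 X2 .
  show ?thesis unfolding LHS RHS' ..
qed

definition Phi5 :: "real \<Rightarrow> real^'n \<Rightarrow> real^'n \<Rightarrow> real \<Rightarrow> real \<times> (real^'n) \<Rightarrow> real \<times> (real^'n) \<Rightarrow> real \<times> (real^'n) \<Rightarrow> real \<times> (real^'n) \<Rightarrow> real \<times> (real^'n) \<Rightarrow> real^'n" where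
  "Phi5 c v a f T1 Ta Tuu Tua Tuuu = PhiG c v a f T1 (Ta + Tuu)
      ((-3 * (v \<bullet> a) / (c\<^sup>2 - v \<bullet> v)) *\<^sub>R Ta + Tua + (Tua + Tua + Tuuu))"

lemma Phi5_zero: "Phi5 c v 0 f T1 0 Tuu 0 Tuuu = snd Tuuu - fst Tuuu *\<^sub>R v"
  unfolding Phi5_def PhiG_def linBf_def bq_def bpq_def by simp

lemma Phi5_even:
  fixes v a :: "real^'n"
  assumes W: "c\<^sup>2 - v \<bullet> v = W" and w: "W \<noteq> 0"
  shows "Phi5 c v a f (F1, X1) (Fa, Xa) (F2, X2) (F2a, X2a) (F3, X3)
       + Phi5 c v (-a) f (F1, X1) (-Fa, -Xa) (F2, X2) (-F2a, -X2a) (F3, X3)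
       - 2 *\<^sub>R Phi5 c v 0 f (F1, X1) 0 (F2, X2) 0 (F3, X3)
     = (6 / W\<^sup>2 * (W * (- c\<^sup>2 * Fa + v \<bullet> Xa + X1 \<bullet> a)
          + (v \<bullet> a) * (2 * (- c\<^sup>2 * F1 + v \<bullet> X1)))) *\<^sub>R a"
proof -
  have c2: "c\<^sup>2 = W + v \<bullet> v" using W by simp
  show ?thesis
  unfolding Phi5_def PhiG_def linBf_def bq_def bpq_def W
  apply (simp add: vec_eq_iff inner_diff_left inner_diff_right inner_add_left inner_add_right
      inner_commute[of a v] inner_commute[of X1 v] c2)
  apply (simp add: field_simps power2_eq_square w)
  done
qed

lemma Phi5_decomp:
  fixes v a :: "real^'n"
  assumes W: "c\<^sup>2 - v \<bullet> v = W" and w: "W \<noteq> 0"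
  shows "Phi5 c v a f (F1, X1) (Fa, Xa) (F2, X2) (F2a, X2a) (F3, X3)
     = (X3 - F3 *\<^sub>R v) + (3 / W) *\<^sub>R (W *\<^sub>R (X2a - F2a *\<^sub>R v) + (v \<bullet> a) *\<^sub>R (X2 - F2 *\<^sub>R v) + (v \<bullet> X2 - c\<^sup>2 * F2) *\<^sub>R a)
       + (3 / W\<^sup>2 * (W * (- c\<^sup>2 * Fa + v \<bullet> Xa + X1 \<bullet> a)
          + (v \<bullet> a) * (2 * (- c\<^sup>2 * F1 + v \<bullet> X1)))) *\<^sub>R a"
proof -
  have c2: "c\<^sup>2 = W + v \<bullet> v" using W by simp
  show ?thesis
  unfolding Phi5_def PhiG_def linBf_def bq_def bpq_def W
  apply (simp add: vec_eq_iff inner_diff_left inner_diff_right inner_add_left inner_add_right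
      inner_commute[of a v] inner_commute[of X1 v] c2)
  apply (simp add: field_simps power2_eq_square w)
  done
qed

lemma vd_at': "(f has_vector_derivative f') (at t) \<Longrightarrow> vd f t = f'"
  unfolding vd_def by (rule vector_derivative_at)

lemma vd_funpow_eq:
  assumes "Y 0 = x" "\<And>k t. (Y k has_vector_derivative Y (Suc k) t) (at t)"
  shows "(vd ^^ k) x = Y k"
proof (induction k)
  case 0 then show ?case using assms(1) by simp
next
  case (Suc k)
  have "(vd ^^ Suc k) x = vd (Y k)" using Suc by simp
  also have "\<dots> = Y (Suc k)" using vd_at'[OF assms(2)] by blast
  finally show ?case .
qed

lemma smooth_curve_UNIV:
  assumes "Y 0 = x" "\<And>k t. (Y k has_vector_derivative Y (Suc k) t) (at t)"
  shows "smooth_curve_on UNIV x"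
  unfolding smooth_curve_on_def using vd_funpow_eq[OF assms] assms(2) vd_at'[OF assms(2)] by simp

lemma line_solution:
  fixes x0 v0 :: "real^'n"
  assumes "norm v0 < c"
  shows "is_solution c UNIV (\<lambda>t. x0 + (t - t0) *\<^sub>R v0) \<and> vd (\<lambda>t. x0 + (t - t0) *\<^sub>R v0) t0 = v0
     \<and> (vd ^^ 2) (\<lambda>t. x0 + (t - t0) *\<^sub>R v0) t0 = 0"
proof -
  define Y :: "nat \<Rightarrow> real \<Rightarrow> real^'n" where "Y k = (if k = 0 then (\<lambda>t. x0 + (t - t0) *\<^sub>R v0) else if k = 1 then (\<lambda>t. v0) else (\<lambda>t. 0))" for k
  have D: "(Y k has_vector_derivative Y (Suc k) t) (at t)" for k t
    unfolding Y_def by (cases "k = 0") (auto intro!: derivative_eq_intros)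
  have Y0: "Y 0 = (\<lambda>t. x0 + (t - t0) *\<^sub>R v0)" unfolding Y_def by simp
  have E: "(vd ^^ k) (\<lambda>t. x0 + (t - t0) *\<^sub>R v0) = Y k" for k by (rule vd_funpow_eq[OF Y0 D])
  show ?thesis
    unfolding is_solution_def using smooth_curve_UNIV[OF Y0 D] E[of 1] E[of 2] E[of 3] assms
    by (simp add: Y_def Bsys_def)
qed

fun PP :: "nat \<Rightarrow> real poly" where
  "PP 0 = 1"
| "PP (Suc k) = pderiv (PP k) * [:1, 0, 1:] + smult (1 - 2 * real k) ([:0, 1:] * PP k)"

definition psi :: "real \<Rightarrow> real \<Rightarrow> real \<Rightarrow> nat \<Rightarrow> real \<Rightarrow> real" where
  "psi \<kappa> h0 t0 k t = \<kappa> ^ k * poly (PP k) (h0 + \<kappa> * (t - t0)) * (1 + (h0 + \<kappa> * (t - t0))\<^sup>2) powr (1/2 - real k)"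

lemma psi_deriv: "(psi \<kappa> h0 t0 k has_real_derivative psi \<kappa> h0 t0 (Suc k) t) (at t)"
proof -
  define H where "H = h0 + \<kappa> * (t - t0)"
  define r where "r = 1/2 - real k"
  have q0: "1 + H\<^sup>2 > 0" by (simp add: add_pos_nonneg)
  have dH: "((\<lambda>t. h0 + \<kappa> * (t - t0)) has_real_derivative \<kappa>) (at t)"
    by (auto intro!: derivative_eq_intros)
  have dP: "((\<lambda>t. poly (PP k) (h0 + \<kappa> * (t - t0))) has_real_derivative poly (pderiv (PP k)) H * \<kappa>) (at t)"
    unfolding H_def by (rule DERIV_chain2[OF poly_DERIV dH])
  have dq: "((\<lambda>t. 1 + (h0 + \<kappa> * (t - t0))\<^sup>2) has_real_derivative 2 * H * \<kappa>) (at t)"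
    unfolding H_def by (auto intro!: derivative_eq_intros)
  have dpow: "((\<lambda>t. (1 + (h0 + \<kappa> * (t - t0))\<^sup>2) powr r) has_real_derivative r * (1 + H\<^sup>2) powr (r - 1) * (2 * H * \<kappa>)) (at t)"
    using DERIV_fun_powr[OF dq, of r] q0 unfolding H_def by simp
  have fe: "psi \<kappa> h0 t0 k = (\<lambda>x. \<kappa> ^ k * (poly (PP k) (h0 + \<kappa> * (x - t0)) * (1 + (h0 + \<kappa> * (x - t0))\<^sup>2) powr r))"
    unfolding psi_def r_def by (simp add: fun_eq_iff mult.assoc)
  have D: "(psi \<kappa> h0 t0 k has_real_derivative \<kappa> ^ k * (poly (PP k) H * (r * (1 + H\<^sup>2) powr (r - 1) * (2 * H * \<kappa>))
              + poly (pderiv (PP k)) H * \<kappa> * (1 + H\<^sup>2) powr r)) (at t)"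
    unfolding fe
    by (rule DERIV_cong[OF DERIV_cmult[OF DERIV_mult[OF dP dpow], of "\<kappa> ^ k"]]) (simp add: H_def algebra_simps)
  have pw: "(1 + H\<^sup>2) powr r = (1 + H\<^sup>2) * (1 + H\<^sup>2) powr (r - 1)"
    using powr_add[of "1 + H\<^sup>2" 1 "r - 1"] q0 by simp
  have rr: "1/2 - real (Suc k) = r - 1" unfolding r_def by simp
  have pS: "poly (PP (Suc k)) H = poly (pderiv (PP k)) H * (1 + H\<^sup>2) + (1 - 2 * real k) * H * poly (PP k) H"
    by (simp add: power2_eq_square algebra_simps)
  have "\<kappa> ^ k * (poly (PP k) H * (r * (1 + H\<^sup>2) powr (r - 1) * (2 * H * \<kappa>))
              + poly (pderiv (PP k)) H * \<kappa> * (1 + H\<^sup>2) powr r) = psi \<kappa> h0 t0 (Suc k) t"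
    unfolding psi_def H_def[symmetric] rr pS pw by (simp add: r_def algebra_simps)
  then show ?thesis using D by simp
qed

lemma powr_half_minus:
  assumes "q > 0" shows "q powr (1/2 - real k) = sqrt q / q ^ k"
proof -
  have "q powr (1/2 - real k) = q powr (1/2) * q powr (- real k)"
    using powr_add[of q "1/2" "- real k"] by simp
  also have "\<dots> = sqrt q * inverse (q ^ k)"
    unfolding powr_minus powr_realpow[OF assms] powr_half_sqrt[OF less_imp_le[OF assms]] ..
  also have "\<dots> = sqrt q / q ^ k" by (simp add: divide_inverse)
  finally show ?thesis .
qed

lemma psi_alt:
  "psi \<kappa> h0 t0 k t = \<kappa> ^ k * poly (PP k) (h0 + \<kappa> * (t - t0))
      * sqrt (1 + (h0 + \<kappa> * (t - t0))\<^sup>2) / (1 + (h0 + \<kappa> * (t - t0))\<^sup>2) ^ k"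
  unfolding psi_def by (subst powr_half_minus) (auto simp: add_pos_nonneg)

lemma PP_vals: "poly (PP 0) h = 1" "poly (PP 1) h = h" "poly (PP 2) h = 1" "poly (PP 3) h = - 3 * h"
  by (simp_all add: numeral_eq_Suc pderiv_pCons pderiv_mult algebra_simps)

lemma hyper_solution:
  fixes x0 v0 a0 :: "real^'n"
  assumes nv: "norm v0 < c" and a0: "a0 \<noteq> 0"
  shows "\<exists>x. is_solution c UNIV x \<and> x t0 = x0 \<and> vd x t0 = v0 \<and> (vd ^^ 2) x t0 = a0"
proof -
  define n where "n = (1 / norm a0) *\<^sub>R a0"
  have na: "norm a0 > 0" using a0 by simp
  have nn: "n \<bullet> n = 1" unfolding n_def using na by (simp add: power2_norm_eq_inner[symmetric] power2_eq_square)
  have an: "a0 = norm a0 *\<^sub>R n" unfolding n_def using na by simp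
  define z0 where "z0 = v0 \<bullet> n"
  define vp where "vp = v0 - z0 *\<^sub>R n"
  have vpn: "vp \<bullet> n = 0" unfolding vp_def z0_def by (simp add: inner_diff_left nn)
  have nvp: "n \<bullet> vp = 0" using vpn by (simp add: inner_commute)
  have vpvp: "vp \<bullet> vp = v0 \<bullet> v0 - z0\<^sup>2"
    unfolding vp_def z0_def by (simp add: inner_diff_left inner_diff_right nn inner_commute power2_eq_square)
  have c0: "c > 0" using nv norm_ge_zero[of v0] by linarith
  define W0 where "W0 = c\<^sup>2 - v0 \<bullet> v0"
  have W0: "W0 > 0"
  proof -
    have "(norm v0)\<^sup>2 < c\<^sup>2" using nv by (smt (verit) norm_ge_zero power_strict_mono zero_less_numeral)
    then show ?thesis unfolding W0_def by (simp add: power2_norm_eq_inner)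
  qed
  define C where "C = sqrt (W0 + z0\<^sup>2)"
  have WZ: "W0 + z0\<^sup>2 > 0" using W0 by (simp add: add_pos_nonneg)
  have Cpos: "C > 0" unfolding C_def using WZ by simp
  have C2: "C\<^sup>2 = W0 + z0\<^sup>2" unfolding C_def using WZ by simp
  have C2': "C\<^sup>2 = c\<^sup>2 - vp \<bullet> vp" unfolding C2 vpvp W0_def by simp
  define h0 where "h0 = z0 / sqrt W0"
  define \<kappa> where "\<kappa> = norm a0 * C\<^sup>2 / (W0 * sqrt W0)"
  have kpos: "\<kappa> > 0" unfolding \<kappa>_def using na Cpos W0 by simp
  define \<Psi> where "\<Psi> = psi \<kappa> h0 t0"
  define Y :: "nat \<Rightarrow> real \<Rightarrow> real^'n" where
    "Y k t = (if k = 0 then x0 + (t - t0) *\<^sub>R vp + ((C / \<kappa>) * (\<Psi> 0 t - \<Psi> 0 t0)) *\<^sub>R n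
              else (if k = 1 then vp else 0) + ((C / \<kappa>) * \<Psi> k t) *\<^sub>R n)" for k t
  have D: "(Y k has_vector_derivative Y (Suc k) t) (at t)" for k t
  proof (cases "k = 0")
    case True
    have d: "((\<lambda>t. (C / \<kappa>) * (\<Psi> 0 t - \<Psi> 0 t0)) has_real_derivative (C / \<kappa>) * \<Psi> 1 t) (at t)"
      using DERIV_cmult[OF DERIV_diff[OF psi_deriv[of \<kappa> h0 t0 0 t] DERIV_const], of "C / \<kappa>" "\<Psi> 0 t0"]
      unfolding \<Psi>_def by simp
    have "((\<lambda>t. x0 + (t - t0) *\<^sub>R vp + ((C / \<kappa>) * (\<Psi> 0 t - \<Psi> 0 t0)) *\<^sub>R n) has_vector_derivative
            vp + ((C / \<kappa>) * \<Psi> 1 t) *\<^sub>R n) (at t)"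
      using has_vector_derivative_add[OF has_vector_derivative_add[OF has_vector_derivative_const
          has_vector_derivative_scaleR[OF DERIV_diff[OF DERIV_ident DERIV_const] has_vector_derivative_const]]
          has_vector_derivative_scaleR[OF d has_vector_derivative_const]] by simp
    then show ?thesis using True unfolding Y_def[abs_def] by simp
  next
    case False
    have d: "((\<lambda>t. (C / \<kappa>) * \<Psi> k t) has_real_derivative (C / \<kappa>) * \<Psi> (Suc k) t) (at t)"
      using DERIV_cmult[OF psi_deriv[of \<kappa> h0 t0 k t], of "C / \<kappa>"] unfolding \<Psi>_def by simp
    have "((\<lambda>t. (if k = 1 then vp else 0) + ((C / \<kappa>) * \<Psi> k t) *\<^sub>R n) has_vector_derivative
            0 + (((C / \<kappa>) * \<Psi> k t) *\<^sub>R 0 + ((C / \<kappa>) * \<Psi> (Suc k) t) *\<^sub>R n)) (at t)"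
      by (rule has_vector_derivative_add[OF has_vector_derivative_const
          has_vector_derivative_scaleR[OF d has_vector_derivative_const]])
    then show ?thesis using False unfolding Y_def[abs_def] by simp
  qed
  define x where "x = Y 0"
  have Y0: "Y 0 = x" unfolding x_def ..
  have E: "(vd ^^ k) x = Y k" for k by (rule vd_funpow_eq[OF Y0 D])
  have sm: "smooth_curve_on UNIV x" by (rule smooth_curve_UNIV[OF Y0 D])
  define H where "H t = h0 + \<kappa> * (t - t0)" for t
  define q where "q t = 1 + (H t)\<^sup>2" for t
  define s where "s t = sqrt (q t)" for t
  have qpos: "q t > 0" for t unfolding q_def by (simp add: add_pos_nonneg)
  have spos: "s t > 0" for t unfolding s_def using qpos by simp
  have ss: "s t * s t = q t" for t unfolding s_def using qpos by (simp add: less_imp_le)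
  have Y1: "Y 1 t = vp + (C * H t / s t) *\<^sub>R n" for t
  proof -
    have "(C / \<kappa>) * \<Psi> 1 t = C * H t / s t"
      unfolding \<Psi>_def psi_alt PP_vals H_def[symmetric] q_def[symmetric] s_def[symmetric]
      using kpos ss[of t] spos[of t] qpos[of t] by (simp add: field_simps)
    then show ?thesis unfolding Y_def by simp
  qed
  have Y2: "Y 2 t = (C * \<kappa> / (q t * s t)) *\<^sub>R n" for t
  proof -
    have "(C / \<kappa>) * \<Psi> 2 t = C * \<kappa> / (q t * s t)"
      unfolding \<Psi>_def psi_alt PP_vals H_def[symmetric] q_def[symmetric] s_def[symmetric]
      using kpos ss[of t] spos[of t] qpos[of t] by (simp add: field_simps power2_eq_square)
    then show ?thesis unfolding Y_def by simp
  qed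
  have Y3: "Y 3 t = (-3 * C * \<kappa>\<^sup>2 * H t / (q t * q t * s t)) *\<^sub>R n" for t
  proof -
    have "(C / \<kappa>) * \<Psi> 3 t = -3 * C * \<kappa>\<^sup>2 * H t / (q t * q t * s t)"
      unfolding \<Psi>_def psi_alt PP_vals H_def[symmetric] q_def[symmetric] s_def[symmetric]
      using kpos ss[of t] spos[of t] qpos[of t] by (simp add: field_simps power2_eq_square power3_eq_cube)
    then show ?thesis unfolding Y_def by simp
  qed
  have qH: "q t = 1 + (H t)\<^sup>2" for t unfolding q_def ..
  have in11: "Y 1 t \<bullet> Y 1 t = vp \<bullet> vp + C\<^sup>2 * (H t)\<^sup>2 / q t" for t
    unfolding Y1 using ss[of t] spos[of t]
    by (simp add: inner_add_left inner_add_right vpn nvp nn power2_eq_square field_simps)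
  have in12: "Y 1 t \<bullet> Y 2 t = C\<^sup>2 * H t * \<kappa> / (q t * q t)" for t
    unfolding Y1 Y2 using ss[of t] spos[of t] qpos[of t]
    by (simp add: inner_add_left inner_add_right vpn nvp nn power2_eq_square field_simps)
  have den: "c\<^sup>2 - Y 1 t \<bullet> Y 1 t = C\<^sup>2 / q t" for t
  proof -
    have "c\<^sup>2 - Y 1 t \<bullet> Y 1 t = C\<^sup>2 - C\<^sup>2 * (H t)\<^sup>2 / q t" unfolding in11 C2' by simp
    also have "\<dots> = C\<^sup>2 / q t" using qpos[of t] unfolding qH by (simp add: field_simps)
    finally show ?thesis .
  qed
  have Bz: "Bsys c (Y 1 t) (Y 2 t) (Y 3 t) = 0" for t
  proof -
    have "Bsys c (Y 1 t) (Y 2 t) (Y 3 t) = (-3 * C * \<kappa>\<^sup>2 * H t / (q t * q t * s t)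
        + 3 * (C\<^sup>2 * H t * \<kappa> / (q t * q t)) / (C\<^sup>2 / q t) * (C * \<kappa> / (q t * s t))) *\<^sub>R n"
      unfolding Bsys_def den in12 unfolding Y3 Y2 by (simp only: scaleR_add_left scaleR_scaleR)
    also have "\<dots> = 0" using qpos[of t] spos[of t] Cpos by (simp add: field_simps power2_eq_square)
    finally show ?thesis .
  qed
  have nY: "norm (Y 1 t) < c" for t
  proof -
    have "C\<^sup>2 * (H t)\<^sup>2 / q t < C\<^sup>2" using qpos[of t] Cpos unfolding qH by (simp add: field_simps)
    then have "Y 1 t \<bullet> Y 1 t < c\<^sup>2" unfolding in11 C2' by simp
    then have "(norm (Y 1 t))\<^sup>2 < c\<^sup>2" by (simp add: power2_norm_eq_inner)
    then show ?thesis using c0 by (smt (verit) norm_ge_zero power_mono)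
  qed
  have Ht0: "H t0 = h0" unfolding H_def by simp
  have sW: "sqrt W0 > 0" using W0 by simp
  have qt0: "q t0 = C\<^sup>2 / W0" unfolding qH Ht0 h0_def C2 using W0 sW by (simp add: field_simps power2_eq_square)
  have st0: "s t0 = C / sqrt W0" unfolding s_def qt0 using W0 Cpos by (simp add: real_sqrt_divide)
  have iv1: "Y 1 t0 = v0"
  proof -
    have "C * H t0 / s t0 = z0" unfolding Ht0 st0 h0_def using Cpos sW by (simp add: field_simps)
    then show ?thesis unfolding Y1 vp_def by simp
  qed
  have iv2: "Y 2 t0 = a0"
  proof -
    have "C * \<kappa> / (q t0 * s t0) = norm a0" unfolding qt0 st0 \<kappa>_def using Cpos sW W0
      by (simp add: field_simps power2_eq_square)
    then show ?thesis unfolding Y2 using an by simp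
  qed
  have iv0: "x t0 = x0" unfolding x_def Y_def by simp
  show ?thesis
  proof (intro exI[of _ x] conjI)
    show "is_solution c UNIV x" unfolding is_solution_def using sm E[of 1] E[of 2] E[of 3] Bz nY
      by (simp add: numeral_eq_Suc)
    show "x t0 = x0" by (rule iv0)
    show "vd x t0 = v0" using E[of 1] iv1 by simp
    show "(vd ^^ 2) x t0 = a0" using E[of 2] iv2 by simp
  qed
qed

lemma exists_solution:
  fixes x0 v0 a0 :: "real^'n"
  assumes nv: "norm v0 < c"
  shows "\<exists>x. is_solution c UNIV x \<and> x t0 = x0 \<and> vd x t0 = v0 \<and> (vd ^^ 2) x t0 = a0"
proof (cases "a0 = 0")
  case True
  then show ?thesis using line_solution[OF nv, of x0 t0] by (intro exI[of _ "\<lambda>t. x0 + (t - t0) *\<^sub>R v0"]) simp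
next
  case False
  then show ?thesis using hyper_solution[OF nv False] by blast
qed

lemma pair_scale0: "(0::real, r *\<^sub>R a) = r *\<^sub>R (0::real, a)" by simp
lemma pair_neg0: "(0::real, - a) = - (0::real, a)" by simp

lemma PhiV_Phi5:
  fixes V :: "real \<times> (real^'n) \<Rightarrow> real \<times> (real^'n)"
  assumes V: "smooth_fun V"
  shows "PhiV c V p v a = Phi5 c v a (fst (V p)) (dd V (1, v) p) (dd V (0, a) p)
      (dd (dd V (1, v)) (1, v) p) (dd (dd V (1, v)) (0, a) p) (dd (dd (dd V (1, v)) (1, v)) (1, v) p)"
proof -
  have b: "dd V (0, bq c v a) p = (-3 * (v \<bullet> a) / (c\<^sup>2 - v \<bullet> v)) *\<^sub>R dd V (0, a) p"
    unfolding bq_def pair_scale0 dd_scale[OF V] ..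
  have s: "dd (dd V (0, a)) (1, v) p = dd (dd V (1, v)) (0, a) p" by (rule second_sym[OF V])
  show ?thesis unfolding PhiV_def Phi5_def b s ..
qed

lemma sym_Phi_zero:
  fixes V :: "real \<times> (real^'n) \<Rightarrow> real \<times> (real^'n)"
  assumes L: "lie_point_symmetry c V" and nv: "norm v < c"
  shows "PhiV c V p v a = 0"
proof -
  obtain t0 x0 where p: "p = (t0, x0)" by (cases p)
  obtain x where sol: "is_solution c UNIV x" and i0: "x t0 = x0" and i1: "vd x t0 = v" and i2: "(vd ^^ 2) x t0 = a"
    using exists_solution[OF nv] by blast
  have V: "smooth_fun V" using L unfolding lie_point_symmetry_def by blast
  have "linB c (vd x t0) ((vd ^^ 2) x t0) ((vd ^^ 3) x t0)
      (vd (\<lambda>t. snd (V (t, x t)) - fst (V (t, x t)) *\<^sub>R vd x t) t0)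
      ((vd ^^ 2) (\<lambda>t. snd (V (t, x t)) - fst (V (t, x t)) *\<^sub>R vd x t) t0)
      ((vd ^^ 3) (\<lambda>t. snd (V (t, x t)) - fst (V (t, x t)) *\<^sub>R vd x t) t0) = 0"
    using L sol unfolding lie_point_symmetry_def Let_def by blast
  then show ?thesis using sol_Phi[OF V sol, of t0] i0 i1 i2 p by simp
qed

lemma E0:
  fixes V :: "real \<times> (real^'n) \<Rightarrow> real \<times> (real^'n)"
  assumes L: "lie_point_symmetry c V" and nv: "norm v < c"
  shows "snd (dd (dd (dd V (1, v)) (1, v)) (1, v) p) = fst (dd (dd (dd V (1, v)) (1, v)) (1, v) p) *\<^sub>R v"
proof -
  have V: "smooth_fun V" using L unfolding lie_point_symmetry_def by blast
  have z1: "dd V (0, 0) p = 0" using dd_zero[OF V] by (simp add: zero_prod_def)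
  have z2: "dd (dd V (1, v)) (0, 0) p = 0" using dd_zero[OF smooth_dd[OF V]] by (simp add: zero_prod_def)
  have "PhiV c V p v 0 = 0" by (rule sym_Phi_zero[OF L nv])
  then show ?thesis unfolding PhiV_Phi5[OF V] z1 z2 Phi5_zero by simp
qed

lemma wpos: "norm (v::real^'n) < c \<Longrightarrow> c\<^sup>2 - v \<bullet> v > 0"
proof -
  assume "norm v < c"
  then have "(norm v)\<^sup>2 < c\<^sup>2" by (smt (verit) norm_ge_zero power_strict_mono zero_less_numeral)
  then show ?thesis by (simp add: power2_norm_eq_inner)
qed

lemma E2:
  fixes V :: "real \<times> (real^'n) \<Rightarrow> real \<times> (real^'n)"
  assumes L: "lie_point_symmetry c V" and nv: "norm v < c"
  shows "(c\<^sup>2 - v \<bullet> v) * (- c\<^sup>2 * fst (dd V (0, a) p) + v \<bullet> snd (dd V (0, a) p) + snd (dd V (1, v) p) \<bullet> a)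
      + (v \<bullet> a) * (2 * (- c\<^sup>2 * fst (dd V (1, v) p) + v \<bullet> snd (dd V (1, v) p))) = 0"
proof -
  have V: "smooth_fun V" using L unfolding lie_point_symmetry_def by blast
  define W where "W = c\<^sup>2 - v \<bullet> v"
  have W: "W > 0" unfolding W_def by (rule wpos[OF nv])
  obtain F1 X1 where T1: "dd V (1, v) p = (F1, X1)" by (cases "dd V (1, v) p")
  obtain Fa Xa where Ta: "dd V (0, a) p = (Fa, Xa)" by (cases "dd V (0, a) p")
  obtain F2 X2 where Tuu: "dd (dd V (1, v)) (1, v) p = (F2, X2)" by (cases "dd (dd V (1, v)) (1, v) p")
  obtain F2a X2a where Tua: "dd (dd V (1, v)) (0, a) p = (F2a, X2a)" by (cases "dd (dd V (1, v)) (0, a) p")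
  obtain F3 X3 where T3: "dd (dd (dd V (1, v)) (1, v)) (1, v) p = (F3, X3)" by (cases "dd (dd (dd V (1, v)) (1, v)) (1, v) p")
  have z1: "dd V (0, 0) p = 0" using dd_zero[OF V] by (simp add: zero_prod_def)
  have z2: "dd (dd V (1, v)) (0, 0) p = 0" using dd_zero[OF smooth_dd[OF V]] by (simp add: zero_prod_def)
  have n1: "dd V (0, -a) p = (-Fa, -Xa)" unfolding pair_neg0 dd_neg[OF V] Ta by simp
  have n2: "dd (dd V (1, v)) (0, -a) p = (-F2a, -X2a)" unfolding pair_neg0 dd_neg[OF smooth_dd[OF V]] Tua by simp
  have P1: "Phi5 c v a (fst (V p)) (F1, X1) (Fa, Xa) (F2, X2) (F2a, X2a) (F3, X3) = 0"
    using sym_Phi_zero[OF L nv, of p a] unfolding PhiV_Phi5[OF V] T1 Ta Tuu Tua T3 .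
  have P2: "Phi5 c v (-a) (fst (V p)) (F1, X1) (-Fa, -Xa) (F2, X2) (-F2a, -X2a) (F3, X3) = 0"
    using sym_Phi_zero[OF L nv, of p "-a"] unfolding PhiV_Phi5[OF V] T1 n1 Tuu n2 T3 .
  have P3: "Phi5 c v 0 (fst (V p)) (F1, X1) 0 (F2, X2) 0 (F3, X3) = 0"
    using sym_Phi_zero[OF L nv, of p 0] unfolding PhiV_Phi5[OF V] T1 z1 Tuu z2 T3 .
  have "(6 / W\<^sup>2 * (W * (- c\<^sup>2 * Fa + v \<bullet> Xa + X1 \<bullet> a)
          + (v \<bullet> a) * (2 * (- c\<^sup>2 * F1 + v \<bullet> X1)))) *\<^sub>R a = 0"
    using Phi5_even[OF W_def[symmetric], of a "fst (V p)" F1 X1 Fa Xa F2 X2 F2a X2a F3 X3] W P1 P2 P3 by simp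
  then have "a = 0 \<or> (W * (- c\<^sup>2 * Fa + v \<bullet> Xa + X1 \<bullet> a) + (v \<bullet> a) * (2 * (- c\<^sup>2 * F1 + v \<bullet> X1))) = 0"
  proof -
    assume h: "(6 / W\<^sup>2 * (W * (- c\<^sup>2 * Fa + v \<bullet> Xa + X1 \<bullet> a)
          + (v \<bullet> a) * (2 * (- c\<^sup>2 * F1 + v \<bullet> X1)))) *\<^sub>R a = 0"
    then have "a = 0 \<or> 6 / W\<^sup>2 * (W * (- c\<^sup>2 * Fa + v \<bullet> Xa + X1 \<bullet> a)
          + (v \<bullet> a) * (2 * (- c\<^sup>2 * F1 + v \<bullet> X1))) = 0" by (simp only: scaleR_eq_0_iff) blast
    then show ?thesis using W by (simp only: mult_eq_0_iff) simp
  qed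
  moreover have "a = 0 \<Longrightarrow> (W * (- c\<^sup>2 * Fa + v \<bullet> Xa + X1 \<bullet> a) + (v \<bullet> a) * (2 * (- c\<^sup>2 * F1 + v \<bullet> X1))) = 0"
    using Ta z1 by (simp add: zero_prod_def)
  ultimately show ?thesis unfolding W_def[symmetric] T1 Ta by auto
qed

definition mink :: "real \<Rightarrow> real \<times> (real^'n) \<Rightarrow> real \<times> (real^'n) \<Rightarrow> real" where
  "mink c h k = - c\<^sup>2 * fst h * fst k + snd h \<bullet> snd k"

lemma mink_sym: "mink c h k = mink c k h"
  unfolding mink_def by (simp add: inner_commute mult_ac)

lemma mink_lin2: "mink c h (r *\<^sub>R k1 + s *\<^sub>R k2) = r * mink c h k1 + s * mink c h k2"
  unfolding mink_def by (simp add: inner_add_right algebra_simps)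
lemma mink_lin1: "mink c (r *\<^sub>R k1 + s *\<^sub>R k2) h = r * mink c k1 h + s * mink c k2 h"
  using mink_lin2 mink_sym by metis
lemma mink_add2: "mink c h (k1 + k2) = mink c h k1 + mink c h k2"
  using mink_lin2[of c h 1 k1 1 k2] by simp
lemma mink_scale2: "mink c h (r *\<^sub>R k) = r * mink c h k"
  using mink_lin2[of c h r k 0 k] by simp
lemma mink_add1: "mink c (k1 + k2) h = mink c k1 h + mink c k2 h"
  using mink_lin1[of c 1 k1 1 k2 h] by simp
lemma mink_scale1: "mink c (r *\<^sub>R k) h = r * mink c k h"
  using mink_lin1[of c r k 0 k h] by simp
lemma mink_neg1: "mink c (- k) h = - mink c k h"
  using mink_scale1[of c "-1" k h] by simp
lemma mink_neg2: "mink c h (- k) = - mink c h k"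
  using mink_scale2[of c h "-1" k] by simp
lemma mink_diff1: "mink c (k1 - k2) h = mink c k1 h - mink c k2 h"
  using mink_add1[of c k1 "-k2" h] mink_neg1 by simp
lemma mink_diff2: "mink c h (k1 - k2) = mink c h k1 - mink c h k2"
  using mink_add2[of c h k1 "-k2"] mink_neg2 by simp
lemma mink_zero1: "mink c 0 h = 0" unfolding mink_def by simp
lemma mink_zero2: "mink c h 0 = 0" unfolding mink_def by simp

lemma mink_blin: "bounded_linear (mink c h)"
proof -
  have "linear (mink c h)" by (rule linearI) (simp_all add: mink_add2 mink_scale2)
  then show ?thesis by (simp add: linear_conv_bounded_linear)
qed

definition SS :: "real \<Rightarrow> (real \<times> (real^'n) \<Rightarrow> real \<times> (real^'n)) \<Rightarrow> real \<times> (real^'n) \<Rightarrow> real \<times> (real^'n) \<Rightarrow> real \<times> (real^'n) \<Rightarrow> real" where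
  "SS c V p h k = mink c h (dd V k p) + mink c (dd V h p) k"

lemma SS_sym: "SS c V p h k = SS c V p k h"
  unfolding SS_def using mink_sym by (metis add.commute)

lemma SS_lin2: "smooth_fun V \<Longrightarrow> SS c V p h (r *\<^sub>R k1 + s *\<^sub>R k2) = r * SS c V p h k1 + s * SS c V p h k2"
  unfolding SS_def by (simp add: dd_add dd_scale mink_lin2 mink_add2 mink_scale2 algebra_simps)

lemma SS_lin1: "smooth_fun V \<Longrightarrow> SS c V p (r *\<^sub>R k1 + s *\<^sub>R k2) h = r * SS c V p k1 h + s * SS c V p k2 h"
  using SS_lin2 SS_sym by metis

lemma E2':
  fixes V :: "real \<times> (real^'n) \<Rightarrow> real \<times> (real^'n)"
  assumes L: "lie_point_symmetry c V" and nv: "norm v < c"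
  shows "mink c (1, v) (1, v) * SS c V p (1, v) (0, a) = mink c (1, v) (0, a) * SS c V p (1, v) (1, v)"
  using E2[OF L nv, of a p] unfolding SS_def mink_def
  by (simp add: inner_commute algebra_simps)

lemma CK_timelike:
  fixes V :: "real \<times> (real^'n) \<Rightarrow> real \<times> (real^'n)"
  assumes L: "lie_point_symmetry c V" and nv: "norm v < c"
  shows "mink c (1, v) (1, v) * SS c V p (1, v) k = mink c (1, v) k * SS c V p (1, v) (1, v)"
proof -
  have V: "smooth_fun V" using L unfolding lie_point_symmetry_def by blast
  obtain k0 y where k: "k = (k0, y)" by (cases k)
  have kk: "k = k0 *\<^sub>R (1, v) + 1 *\<^sub>R (0, y - k0 *\<^sub>R v)" unfolding k by simp
  have e: "mink c (1, v) (1, v) * SS c V p (1, v) (0, y - k0 *\<^sub>R v) = mink c (1, v) (0, y - k0 *\<^sub>R v) * SS c V p (1, v) (1, v)"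
    by (rule E2'[OF L nv])
  show ?thesis
    apply (subst (1 2) kk)
    unfolding SS_lin2[OF V] mink_lin2 using e by (simp add: algebra_simps)
qed

lemma CK:
  fixes V :: "real \<times> (real^'n) \<Rightarrow> real \<times> (real^'n)"
  assumes L: "lie_point_symmetry c V" and c: "c > 0"
  shows "SS c V p h k = (2 * fst (dd V (1, 0) p)) * mink c h k"
proof -
  have V: "smooth_fun V" using L unfolding lie_point_symmetry_def by blast
  define \<sigma> where "\<sigma> = 2 * fst (dd V (1, 0) p)"
  have c2: "c\<^sup>2 > 0" using c by simp
  have n0: "norm (0::real^'n) < c" using c by simp
  have e00: "mink c (1, 0) (1, (0::real^'n)) = - c\<^sup>2" unfolding mink_def by simp
  have S00: "SS c V p (1, 0) (1, 0) = - c\<^sup>2 * \<sigma>" unfolding SS_def mink_def \<sigma>_def by simp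
  have Se0: "SS c V p (1, 0) k = \<sigma> * mink c (1, 0) k" for k
    using CK_timelike[OF L n0, of p k] unfolding e00 S00 using c2 by (simp add: algebra_simps)
  have Su: "SS c V p (1, v) k = \<sigma> * mink c (1, v) k" if nv: "norm v < c" for v k
  proof -
    have mu0: "mink c (1, v) (1, 0) = - c\<^sup>2" unfolding mink_def by simp
    have muu: "mink c (1, v) (1, v) \<noteq> 0" using wpos[OF nv] unfolding mink_def by simp
    have "mink c (1, v) (1, v) * SS c V p (1, v) (1, 0) = mink c (1, v) (1, 0) * SS c V p (1, v) (1, v)"
      by (rule CK_timelike[OF L nv])
    moreover have "SS c V p (1, v) (1, 0) = \<sigma> * mink c (1, v) (1, 0)"
      using Se0[of "(1, v)"] SS_sym mink_sym by metis
    ultimately have Suu: "SS c V p (1, v) (1, v) = \<sigma> * mink c (1, v) (1, v)"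
      unfolding mu0 using c2 by (simp add: algebra_simps)
    have "mink c (1, v) (1, v) * SS c V p (1, v) k = mink c (1, v) k * SS c V p (1, v) (1, v)"
      by (rule CK_timelike[OF L nv])
    then show ?thesis unfolding Suu using muu by (simp add: algebra_simps)
  qed
  obtain h0 y where h: "h = (h0, y)" by (cases h)
  define \<epsilon> where "\<epsilon> = c / (2 * (norm y + 1))"
  have ep: "\<epsilon> > 0" unfolding \<epsilon>_def using c by (simp add: add_nonneg_pos)
  have ny: "norm (\<epsilon> *\<^sub>R y) < c"
  proof -
    have "norm (\<epsilon> *\<^sub>R y) = \<epsilon> * norm y" using ep by simp
    also have "\<dots> < \<epsilon> * (2 * (norm y + 1))"
    proof (rule mult_strict_left_mono)
      show "norm y < 2 * (norm y + 1)" using norm_ge_zero[of y] by (smt (verit))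
    qed (rule ep)
    also have "\<dots> = c" unfolding \<epsilon>_def using norm_ge_zero[of y] by (smt (verit) nonzero_eq_divide_eq)
    finally show ?thesis .
  qed
  have hh: "h = (h0 - 1 / \<epsilon>) *\<^sub>R (1, 0) + (1 / \<epsilon>) *\<^sub>R (1, \<epsilon> *\<^sub>R y)" unfolding h using ep by simp
  show ?thesis
    apply (subst (1 2) hh)
    unfolding SS_lin1[OF V] mink_lin1 Se0 Su[OF ny] \<sigma>_def[symmetric] by (simp add: algebra_simps)
qed

lemma dd_blin:
  assumes W: "smooth_fun W" and L: "bounded_linear L"
  shows "dd (\<lambda>p. L (W p)) l p = L (dd W l p)"
  using bounded_linear.has_derivative[OF L smooth_has_derivative[OF W]] by (rule dd_unique)

lemma mink_blin1: "bounded_linear (\<lambda>z. mink c z k)"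
proof -
  have "(\<lambda>z. mink c z k) = mink c k" using mink_sym by blast
  then show ?thesis using mink_blin[of c k] by simp
qed

definition sig :: "(real \<times> (real^'n) \<Rightarrow> real \<times> (real^'n)) \<Rightarrow> real \<times> (real^'n) \<Rightarrow> real" where
  "sig V p = 2 * fst (dd V (1, 0) p)"

lemma sig_smooth: "smooth_fun V \<Longrightarrow> smooth_fun (sig V)"
  unfolding sig_def[abs_def]
  by (rule smooth_blin[OF bounded_linear_compose[OF bounded_linear_mult_right bounded_linear_fst] smooth_dd])

lemma D2CK:
  fixes V :: "real \<times> (real^'n) \<Rightarrow> real \<times> (real^'n)"
  assumes L: "lie_point_symmetry c V" and c: "c > 0"
  shows "mink c h (dd (dd V k) l p) + mink c (dd (dd V h) l p) k = dd (sig V) l p * mink c h k"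
proof -
  have V: "smooth_fun V" using L unfolding lie_point_symmetry_def by blast
  have feq: "(\<lambda>p. mink c h (dd V k p) + mink c (dd V h p) k) = (\<lambda>p. sig V p * mink c h k)"
    using CK[OF L c] unfolding SS_def sig_def by blast
  have "((\<lambda>p. mink c h (dd V k p) + mink c (dd V h p) k) has_derivative
      (\<lambda>l. mink c h (dd (dd V k) l p) + mink c (dd (dd V h) l p) k)) (at p)"
    by (intro has_derivative_add bounded_linear.has_derivative[OF mink_blin] bounded_linear.has_derivative[OF mink_blin1]
        smooth_has_derivative smooth_dd V)
  then have "dd (\<lambda>p. mink c h (dd V k p) + mink c (dd V h p) k) l p = mink c h (dd (dd V k) l p) + mink c (dd (dd V h) l p) k"
    by (rule dd_unique)
  moreover have "((\<lambda>p. sig V p * mink c h k) has_derivative (\<lambda>l. dd (sig V) l p * mink c h k)) (at p)"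
    by (intro bounded_linear.has_derivative[OF bounded_linear_mult_left] smooth_has_derivative sig_smooth V)
  then have "dd (\<lambda>p. sig V p * mink c h k) l p = dd (sig V) l p * mink c h k" by (rule dd_unique)
  ultimately show ?thesis using feq by simp
qed

lemma D2form:
  fixes V :: "real \<times> (real^'n) \<Rightarrow> real \<times> (real^'n)"
  assumes L: "lie_point_symmetry c V" and c: "c > 0"
  shows "mink c h (dd (dd V k) l p) = (dd (sig V) l p * mink c h k + dd (sig V) k p * mink c h l - dd (sig V) h p * mink c k l) / 2"
proof -
  have V: "smooth_fun V" using L unfolding lie_point_symmetry_def by blast
  define B where "B h k l = mink c h (dd (dd V k) l p)" for h k l
  have Bs: "B x y z = B x z y" for x y z unfolding B_def using second_sym[OF V] by metis
  have Ck: "B x y z + B y x z = dd (sig V) z p * mink c x y" for x y z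
    unfolding B_def using D2CK[OF L c, of x y z p] mink_sym by metis
  have "2 * B h k l = dd (sig V) l p * mink c h k + dd (sig V) k p * mink c h l - dd (sig V) h p * mink c k l"
    using Ck[of h k l] Ck[of h l k] Ck[of k l h] Bs[of h l k] Bs[of l h k] Bs[of k h l] by linarith
  then show ?thesis unfolding B_def by simp
qed

lemma D3form:
  fixes V :: "real \<times> (real^'n) \<Rightarrow> real \<times> (real^'n)"
  assumes L: "lie_point_symmetry c V" and c: "c > 0"
  shows "mink c h (dd (dd (dd V k) l) m p) = (dd (dd (sig V) l) m p * mink c h k + dd (dd (sig V) k) m p * mink c h l
            - dd (dd (sig V) h) m p * mink c k l) / 2"
proof -
  have V: "smooth_fun V" using L unfolding lie_point_symmetry_def by blast
  have S: "smooth_fun (sig V)" by (rule sig_smooth[OF V])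
  have feq: "(\<lambda>p. mink c h (dd (dd V k) l p)) = (\<lambda>p. (dd (sig V) l p * mink c h k + dd (sig V) k p * mink c h l - dd (sig V) h p * mink c k l) / 2)"
    using D2form[OF L c] by blast
  have "dd (\<lambda>p. mink c h (dd (dd V k) l p)) m p = mink c h (dd (dd (dd V k) l) m p)"
    by (rule dd_blin[OF smooth_dd[OF smooth_dd[OF V]] mink_blin])
  moreover have "((\<lambda>p. (dd (sig V) l p * mink c h k + dd (sig V) k p * mink c h l - dd (sig V) h p * mink c k l) / 2) has_derivative
      (\<lambda>m. (dd (dd (sig V) l) m p * mink c h k + dd (dd (sig V) k) m p * mink c h l - dd (dd (sig V) h) m p * mink c k l) / 2)) (at p)"
    by (intro bounded_linear.has_derivative[OF bounded_linear_divide] has_derivative_add has_derivative_diff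
        bounded_linear.has_derivative[OF bounded_linear_mult_left] smooth_has_derivative smooth_dd S)
  then have "dd (\<lambda>p. (dd (sig V) l p * mink c h k + dd (sig V) k p * mink c h l - dd (sig V) h p * mink c k l) / 2) m p
     = (dd (dd (sig V) l) m p * mink c h k + dd (dd (sig V) k) m p * mink c h l - dd (dd (sig V) h) m p * mink c k l) / 2"
    by (rule dd_unique)
  ultimately show ?thesis using feq by metis
qed

lemma timelike_ext:
  fixes F G :: "real \<times> (real^'n) \<Rightarrow> real"
  assumes c: "c > 0"
    and F: "\<And>r s k1 k2. F (r *\<^sub>R k1 + s *\<^sub>R k2) = r * F k1 + s * F k2"
    and G: "\<And>r s k1 k2. G (r *\<^sub>R k1 + s *\<^sub>R k2) = r * G k1 + s * G k2"
    and eq: "\<And>v. norm v < c \<Longrightarrow> F (1, v) = G (1, v)"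
  shows "F k = G k"
proof -
  obtain h0 y where h: "k = (h0, y)" by (cases k)
  define \<epsilon> where "\<epsilon> = c / (2 * (norm y + 1))"
  have ep: "\<epsilon> > 0" unfolding \<epsilon>_def using c by (simp add: add_nonneg_pos)
  have ny: "norm (\<epsilon> *\<^sub>R y) < c"
  proof -
    have "norm (\<epsilon> *\<^sub>R y) = \<epsilon> * norm y" using ep by simp
    also have "\<dots> < \<epsilon> * (2 * (norm y + 1))"
    proof (rule mult_strict_left_mono)
      show "norm y < 2 * (norm y + 1)" using norm_ge_zero[of y] by (smt (verit))
    qed (rule ep)
    also have "\<dots> = c" unfolding \<epsilon>_def using norm_ge_zero[of y] by (smt (verit) nonzero_eq_divide_eq)
    finally show ?thesis .
  qed
  have n0: "norm (0::real^'n) < c" using c by simp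
  have hh: "k = (h0 - 1 / \<epsilon>) *\<^sub>R (1, 0) + (1 / \<epsilon>) *\<^sub>R (1, \<epsilon> *\<^sub>R y)" unfolding h using ep by simp
  show ?thesis by (subst (1 2) hh) (simp only: F G eq[OF n0] eq[OF ny])
qed

lemma Hzero:
  fixes V :: "real \<times> (real^'n) \<Rightarrow> real \<times> (real^'n)"
  assumes L: "lie_point_symmetry c V" and c: "c > 0"
  shows "dd (dd (sig V) h) k p = 0"
proof -
  have V: "smooth_fun V" using L unfolding lie_point_symmetry_def by blast
  have S: "smooth_fun (sig V)" by (rule sig_smooth[OF V])
  define H where "H h k = dd (dd (sig V) h) k p" for h k
  have Hs: "H x y = H y x" for x y unfolding H_def by (rule second_sym[OF S])
  have Hl2: "H h (r *\<^sub>R k1 + s *\<^sub>R k2) = r * H h k1 + s * H h k2" for h r s k1 k2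
    unfolding H_def using dd_add[OF smooth_dd[OF S]] dd_scale[OF smooth_dd[OF S]] by simp
  have c2: "c\<^sup>2 > 0" using c by simp
  define lam where "lam v = fst (dd (dd (dd V (1, v)) (1, v)) (1, v) p)" for v
  define mu where "mu v = 2 * (H (1, v) (1, v) - lam v) / mink c (1, v) (1, v)" for v
  have Hu: "H h (1, v) = mu v * mink c h (1, v)" if nv: "norm v < c" for h v
  proof -
    have muu: "mink c (1, v) (1, v) \<noteq> 0" using wpos[OF nv] unfolding mink_def by simp
    have D3: "dd (dd (dd V (1, v)) (1, v)) (1, v) p = lam v *\<^sub>R (1, v)"
      using E0[OF L nv, of p] unfolding lam_def by (metis prod.collapse scaleR_Pair mult.right_neutral real_scaleR_def)
    have "lam v * mink c h (1, v) = (H (1, v) (1, v) * mink c h (1, v) + H (1, v) (1, v) * mink c h (1, v) - H h (1, v) * mink c (1, v) (1, v)) / 2"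
      using D3form[OF L c, of h "(1, v)" "(1, v)" "(1, v)" p] unfolding D3 mink_scale2 H_def .
    then show ?thesis unfolding mu_def using muu by (simp add: field_simps)
  qed
  have n0: "norm (0::real^'n) < c" using c by simp
  define mu0 where "mu0 = mu 0"
  have Htl: "H h (1, v) = mu0 * mink c h (1, v)" if nv: "norm v < c" for h v
  proof -
    have a: "H (1, 0) (1, v) = mu v * (- c\<^sup>2)" using Hu[OF nv, of "(1, 0)"] unfolding mink_def by simp
    have b: "H (1, v) (1, 0) = mu0 * (- c\<^sup>2)" using Hu[OF n0, of "(1, v)"] unfolding mink_def mu0_def by simp
    have "mu v = mu0" using a b Hs[of "(1, 0)" "(1, v)"] c2 by simp
    then show ?thesis using Hu[OF nv] by simp
  qed
  have Hall: "H h k = mu0 * mink c h k" for h k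
    by (rule timelike_ext[OF c, where F="H h" and G="\<lambda>k. mu0 * mink c h k"])
       (auto simp: Hl2 mink_lin2 algebra_simps intro: Htl)
  obtain i :: 'n where True by blast
  define y0 where "y0 = (0::real, axis i (1::real))"
  define e0 where "e0 = (1::real, 0::real^'n)"
  have m1: "mink c e0 y0 = 0" "mink c y0 e0 = 0" "mink c y0 y0 = 1" "mink c e0 e0 = - c\<^sup>2"
    unfolding mink_def e0_def y0_def by (simp_all add: inner_axis_axis)
  have sym3: "dd (dd (dd V y0) e0) y0 p = dd (dd (dd V y0) y0) e0 p" by (rule second_sym[OF smooth_dd[OF V]])
  have "mink c e0 (dd (dd (dd V y0) e0) y0 p) = mink c e0 (dd (dd (dd V y0) y0) e0 p)" unfolding sym3 ..
  then have "(H e0 y0 * mink c e0 y0 + H y0 y0 * mink c e0 e0 - H e0 y0 * mink c y0 e0) / 2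
      = (H y0 e0 * mink c e0 y0 + H y0 e0 * mink c e0 y0 - H e0 e0 * mink c y0 y0) / 2"
    unfolding D3form[OF L c] H_def .
  then have "mu0 * c\<^sup>2 = 0" unfolding Hall m1 by simp
  then have "mu0 = 0" using c2 by simp
  then show ?thesis using Hall unfolding H_def by simp
qed

definition Bcf :: "real \<Rightarrow> real \<times> (real^'n) \<Rightarrow> real \<times> (real^'n) \<Rightarrow> real \<times> (real^'n) \<Rightarrow> real \<times> (real^'n)" where
  "Bcf c g k l = (1/2) *\<^sub>R (mink c l g *\<^sub>R k + mink c k g *\<^sub>R l - mink c k l *\<^sub>R g)"

lemma Bcf_sym: "Bcf c g k l = Bcf c g l k"
  unfolding Bcf_def by (simp add: mink_sym algebra_simps)

lemma Bcf_lin2: "Bcf c g k (r *\<^sub>R l1 + s *\<^sub>R l2) = r *\<^sub>R Bcf c g k l1 + s *\<^sub>R Bcf c g k l2"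
  unfolding Bcf_def by (simp add: mink_lin1 mink_lin2 algebra_simps)

lemma Bcf_linear2: "linear (Bcf c g k)"
  by (rule linearI) (simp_all add: Bcf_lin2[of c g k 1 _ 1, simplified] Bcf_lin2[of c g k _ _ 0, simplified])

lemma Bcf_bilinear: "bounded_bilinear (Bcf c g)"
proof -
  have "bilinear (Bcf c g)" unfolding bilinear_def
  proof (intro conjI allI)
    show "linear (Bcf c g x)" for x by (rule Bcf_linear2)
    show "linear (\<lambda>x. Bcf c g x y)" for y
      using Bcf_linear2[of c g y] by (simp add: Bcf_sym[of c g _ y])
  qed
  then show ?thesis by (simp add: bilinear_conv_bounded_bilinear)
qed

lemma mink_nondeg:
  assumes c: "c \<noteq> 0" and h: "\<And>h. mink c h X = mink c h Y"
  shows "X = Y"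
proof -
  have "fst X = fst Y" using h[of "(1, 0)"] c unfolding mink_def by simp
  moreover have "snd X = snd Y"
  proof -
    have "(snd X - snd Y) \<bullet> snd X = (snd X - snd Y) \<bullet> snd Y" using h[of "(0, snd X - snd Y)"] unfolding mink_def by simp
    then have "(snd X - snd Y) \<bullet> (snd X - snd Y) = 0" by (simp add: inner_diff_right)
    then show ?thesis by simp
  qed
  ultimately show ?thesis by (simp add: prod_eq_iff)
qed

lemma const_zero_deriv:
  assumes "\<And>p. (f has_derivative (\<lambda>h. 0)) (at p)"
  shows "f p = f q"
proof -
  obtain C where "\<forall>x\<in>UNIV. f x = C"
    using has_derivative_zero_constant[of UNIV f] assms by (auto intro: has_derivative_at_withinI)
  then show ?thesis by simp
qed

lemma dsig_const:
  fixes V :: "real \<times> (real^'n) \<Rightarrow> real \<times> (real^'n)"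
  assumes L: "lie_point_symmetry c V" and c: "c > 0"
  shows "dd (sig V) l p = dd (sig V) l 0"
proof -
  have V: "smooth_fun V" using L unfolding lie_point_symmetry_def by blast
  have S: "smooth_fun (sig V)" by (rule sig_smooth[OF V])
  have "(dd (sig V) l has_derivative (\<lambda>h. 0)) (at p)" for p
    using smooth_has_derivative[OF smooth_dd[OF S], of l p] Hzero[OF L c] by simp
  then show ?thesis by (rule const_zero_deriv)
qed

definition gvec :: "real \<Rightarrow> (real \<times> (real^'n) \<Rightarrow> real) \<Rightarrow> real \<times> (real^'n)" where
  "gvec c s = (- s (1, 0) / c\<^sup>2, \<chi> i. s (0, axis i 1))"

lemma gvec_mink:
  assumes c: "c \<noteq> 0" and s: "linear s"
  shows "mink c h (gvec c s) = s h"
proof -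
  obtain h0 y where h: "h = (h0, y)" by (cases h)
  have hy: "h = h0 *\<^sub>R (1, 0) + (\<Sum>i\<in>UNIV. (y $ i) *\<^sub>R (0, axis i 1))"
  proof -
    have "(\<Sum>i\<in>UNIV. (y $ i) *\<^sub>R ((0::real), axis i (1::real))) = (0, \<Sum>i\<in>UNIV. (y $ i) *\<^sub>R axis i 1)"
      by (induction rule: infinite_finite_induct) (auto simp: zero_prod_def)
    also have "\<dots> = (0, y)" using basis_expansion[of y] by (simp add: scalar_mult_eq_scaleR)
    finally show ?thesis unfolding h by simp
  qed
  have "s h = h0 * s (1, 0) + (\<Sum>i\<in>UNIV. y $ i * s (0, axis i 1))"
    by (subst hy) (simp only: linear_add[OF s] linear_sum[OF s] linear_scale[OF s] real_scaleR_def)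
  moreover have "mink c h (gvec c s) = h0 * s (1, 0) + (\<Sum>i\<in>UNIV. y $ i * s (0, axis i 1))"
    unfolding mink_def gvec_def h using c by (simp add: inner_vec_def)
  ultimately show ?thesis by simp
qed

definition sgl :: "(real \<times> (real^'n) \<Rightarrow> real \<times> (real^'n)) \<Rightarrow> real \<times> (real^'n) \<Rightarrow> real" where
  "sgl V h = dd (sig V) h 0"

lemma sgl_linear: "smooth_fun V \<Longrightarrow> linear (sgl V)"
proof -
  assume V: "smooth_fun V"
  have "bounded_linear (\<lambda>h. dd (sig V) h 0)" by (rule smooth_linear[OF sig_smooth[OF V]])
  then show ?thesis unfolding sgl_def[abs_def] by (simp add: bounded_linear.linear)
qed

lemma D2const:
  fixes V :: "real \<times> (real^'n) \<Rightarrow> real \<times> (real^'n)"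
  assumes L: "lie_point_symmetry c V" and c: "c > 0"
  shows "dd (dd V k) l p = Bcf c (gvec c (sgl V)) k l"
proof (rule mink_nondeg)
  show "c \<noteq> 0" using c by simp
  have V: "smooth_fun V" using L unfolding lie_point_symmetry_def by blast
  have gm: "mink c x (gvec c (sgl V)) = sgl V x" for x by (rule gvec_mink[OF _ sgl_linear[OF V]]) (use c in simp)
  fix h
  show "mink c h (dd (dd V k) l p) = mink c h (Bcf c (gvec c (sgl V)) k l)"
    unfolding D2form[OF L c] dsig_const[OF L c, of _ p] Bcf_def mink_scale2 mink_add2 mink_diff2 gm
    sgl_def[symmetric] using mink_sym[of c k h] mink_sym[of c l h] by (simp add: field_simps)
qed

lemma D1affine:
  fixes V :: "real \<times> (real^'n) \<Rightarrow> real \<times> (real^'n)"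
  assumes L: "lie_point_symmetry c V" and c: "c > 0"
  shows "dd V k p = dd V k 0 + Bcf c (gvec c (sgl V)) k p"
proof -
  have V: "smooth_fun V" using L unfolding lie_point_symmetry_def by blast
  define g where "g = gvec c (sgl V)"
  have Bd: "(Bcf c g k has_derivative Bcf c g k) (at p)" for p
    by (rule bounded_linear_imp_has_derivative) (simp add: linear_conv_bounded_linear[symmetric] Bcf_linear2)
  have "((\<lambda>p. dd V k p - Bcf c g k p) has_derivative (\<lambda>l. dd (dd V k) l p - Bcf c g k l)) (at p)" for p
    by (intro has_derivative_diff smooth_has_derivative smooth_dd V Bd)
  moreover have "(\<lambda>l. dd (dd V k) l p - Bcf c g k l) = (\<lambda>l. 0)" for p
    unfolding g_def D2const[OF L c] by simp
  ultimately have "((\<lambda>p. dd V k p - Bcf c g k p) has_derivative (\<lambda>l. 0)) (at p)" for p by simp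
  then have "dd V k p - Bcf c g k p = dd V k 0 - Bcf c g k 0" by (rule const_zero_deriv)
  moreover have "Bcf c g k 0 = 0" using linear_0[OF Bcf_linear2] .
  ultimately show ?thesis unfolding g_def[symmetric] by (simp add: algebra_simps)
qed

lemma Vquad:
  fixes V :: "real \<times> (real^'n) \<Rightarrow> real \<times> (real^'n)"
  assumes L: "lie_point_symmetry c V" and c: "c > 0"
  shows "V p = V 0 + dd V p 0 + (1/2) *\<^sub>R Bcf c (gvec c (sgl V)) p p"
proof -
  have V: "smooth_fun V" using L unfolding lie_point_symmetry_def by blast
  define g where "g = gvec c (sgl V)"
  have Ad: "((\<lambda>p. dd V p 0) has_derivative (\<lambda>l. dd V l 0)) (at p)" for p
    by (rule bounded_linear_imp_has_derivative[OF smooth_linear[OF V]])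
  have Bd: "((\<lambda>p. Bcf c g p p) has_derivative (\<lambda>l. Bcf c g p l + Bcf c g l p)) (at p)" for p
    using bounded_bilinear.FDERIV[OF Bcf_bilinear has_derivative_ident has_derivative_ident] .
  have "((\<lambda>p. V p - dd V p 0 - (1/2) *\<^sub>R Bcf c g p p) has_derivative
     (\<lambda>l. dd V l p - dd V l 0 - (1/2) *\<^sub>R (Bcf c g p l + Bcf c g l p))) (at p)" for p
    by (intro has_derivative_diff smooth_has_derivative V Ad has_derivative_scaleR_right Bd)
  moreover have "(\<lambda>l. dd V l p - dd V l 0 - (1/2) *\<^sub>R (Bcf c g p l + Bcf c g l p)) = (\<lambda>l. 0)" for p
  proof
    fix l
    show "dd V l p - dd V l 0 - (1/2) *\<^sub>R (Bcf c g p l + Bcf c g l p) = 0"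
      unfolding D1affine[OF L c, of l p] g_def[symmetric] Bcf_sym[of c g p l] by (simp add: scaleR_add_right[symmetric])
  qed
  ultimately have "((\<lambda>p. V p - dd V p 0 - (1/2) *\<^sub>R Bcf c g p p) has_derivative (\<lambda>l. 0)) (at p)" for p by simp
  then have "V p - dd V p 0 - (1/2) *\<^sub>R Bcf c g p p = V 0 - dd V 0 0 - (1/2) *\<^sub>R Bcf c g 0 0"
    by (rule const_zero_deriv)
  moreover have "Bcf c g 0 0 = 0" using linear_0[OF Bcf_linear2] .
  moreover have "dd V 0 0 = 0" by (rule dd_zero[OF V])
  ultimately show ?thesis unfolding g_def[symmetric] by (simp add: algebra_simps)
qed

definition QF :: "real \<Rightarrow> (real \<times> (real^'n) \<Rightarrow> real \<times> (real^'n)) \<Rightarrow> bool" where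
  "QF c V \<longleftrightarrow> (\<exists>Y0 A g \<sigma>0. linear A \<and> (\<forall>h k. mink c h (A k) + mink c (A h) k = \<sigma>0 * mink c h k)
      \<and> (\<forall>p. V p = Y0 + A p + (1/2) *\<^sub>R Bcf c g p p))"

lemma lie_QF:
  fixes V :: "real \<times> (real^'n) \<Rightarrow> real \<times> (real^'n)"
  assumes L: "lie_point_symmetry c V" and c: "c > 0"
  shows "QF c V"
proof -
  have V: "smooth_fun V" using L unfolding lie_point_symmetry_def by blast
  show ?thesis unfolding QF_def
  proof (intro exI conjI allI)
    show "linear (\<lambda>k. dd V k 0)" using smooth_linear[OF V] by (simp add: bounded_linear.linear)
    show "mink c h (dd V k 0) + mink c (dd V h 0) k = sig V 0 * mink c h k" for h k
      using CK[OF L c, of 0 h k] unfolding SS_def sig_def .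
    show "V p = V 0 + dd V p 0 + (1/2) *\<^sub>R Bcf c (gvec c (sgl V)) p p" for p by (rule Vquad[OF L c])
  qed
qed

lemma smooth_const: "smooth_fun (\<lambda>p. C)"
proof -
  have "\<forall>C. \<forall>p. iter_dd es (\<lambda>p. C) differentiable (at p)" for es :: "'a::real_normed_vector list"
  proof (induction es)
    case Nil then show ?case by simp
  next
    case (Cons e es)
    have "dd (\<lambda>p. C) e = (\<lambda>p. 0)" for C :: 'b
      by (rule ext, rule dd_unique[OF has_derivative_const])
    then show ?case using Cons by (simp add: iter_dd_Cons)
  qed
  then show ?thesis unfolding smooth_fun_def by blast
qed

lemma smooth_from_deriv:
  assumes D: "\<And>p. (V has_derivative D p) (at p)" and S: "\<And>h. smooth_fun (\<lambda>p. D p h)"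
  shows "smooth_fun V"
  unfolding smooth_fun_def
proof (intro allI)
  fix es p
  show "iter_dd es V differentiable (at p)"
  proof (cases es)
    case Nil then show ?thesis using D by (auto simp: differentiable_def)
  next
    case (Cons e es')
    have "dd V e = (\<lambda>p. D p e)" by (rule ext, rule dd_unique[OF D])
    then show ?thesis using S[of e] unfolding Cons iter_dd_Cons smooth_fun_def by simp
  qed
qed

lemma Bcf_has_derivative2: "(Bcf c g k has_derivative Bcf c g k) F"
  by (rule bounded_linear_imp_has_derivative) (simp add: linear_conv_bounded_linear[symmetric] Bcf_linear2)

lemma QF_derivs:
  fixes V :: "real \<times> (real^'n) \<Rightarrow> real \<times> (real^'n)"
  assumes A: "linear A" and Veq: "\<And>p. V p = Y0 + A p + (1/2) *\<^sub>R Bcf c g p p"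
  shows "smooth_fun V" "dd V l p = A l + Bcf c g l p" "dd (dd V l) m p = Bcf c g l m"
    "dd (dd (dd V l) m) n p = 0"
proof -
  have Vf: "V = (\<lambda>p. Y0 + A p + (1/2) *\<^sub>R Bcf c g p p)" using Veq by blast
  have Ad: "(A has_derivative A) F" for F using A by (simp add: linear_conv_bounded_linear bounded_linear_imp_has_derivative)
  have VD: "(V has_derivative (\<lambda>l. A l + Bcf c g l p)) (at p)" for p
  proof -
    have "((\<lambda>p. Y0 + A p + (1/2) *\<^sub>R Bcf c g p p) has_derivative (\<lambda>l. 0 + A l + (1/2) *\<^sub>R (Bcf c g p l + Bcf c g l p))) (at p)"
      by (intro has_derivative_add has_derivative_const Ad has_derivative_scaleR_right
          bounded_bilinear.FDERIV[OF Bcf_bilinear has_derivative_ident has_derivative_ident])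
    moreover have "(\<lambda>l. 0 + A l + (1/2) *\<^sub>R (Bcf c g p l + Bcf c g l p)) = (\<lambda>l. A l + Bcf c g l p)"
      by (rule ext) (simp add: Bcf_sym[of c g p] scaleR_add_right[symmetric])
    ultimately show ?thesis unfolding Vf by simp
  qed
  show d1: "dd V l p = A l + Bcf c g l p" for l p by (rule dd_unique[OF VD])
  have d1f: "dd V l = (\<lambda>p. A l + Bcf c g l p)" for l using d1 by blast
  have D1D: "((\<lambda>p. A l + Bcf c g l p) has_derivative Bcf c g l) (at p)" for l p
    using has_derivative_add[OF has_derivative_const Bcf_has_derivative2] by simp
  show d2: "dd (dd V l) m p = Bcf c g l m" for l m p unfolding d1f by (rule dd_unique[OF D1D])
  have d2f: "dd (dd V l) m = (\<lambda>p. Bcf c g l m)" for l m using d2 by blast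
  show "dd (dd (dd V l) m) n p = 0" unfolding d2f by (rule dd_unique[OF has_derivative_const])
  show "smooth_fun V"
  proof (rule smooth_from_deriv[OF VD])
    fix h
    show "smooth_fun (\<lambda>p. A h + Bcf c g h p)"
      by (rule smooth_from_deriv[OF D1D]) (rule smooth_const)
  qed
qed

lemma Bcf_CK: "mink c h (Bcf c g k p) + mink c (Bcf c g h p) k = mink c p g * mink c h k"
  unfolding Bcf_def mink_scale2 mink_scale1 mink_add2 mink_add1 mink_diff1 mink_diff2
  by (simp add: mink_sym[of c _ h] mink_sym[of c g] mink_sym[of c p k] algebra_simps)

lemma inner_times2: "(x::real^'n) \<bullet> (y * 2) = 2 * (x \<bullet> y)"
proof -
  have "y * 2 = 2 *\<^sub>R y" by (simp add: vec_eq_iff)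
  then show ?thesis by simp
qed

lemma H1_alg:
  fixes v a :: "real^'n"
  assumes "Bcf c g (1, v) (1, v) = (F2, X2)" "Bcf c g (1, v) (0, a) = (F2a, X2a)"
  shows "(c\<^sup>2 - v \<bullet> v) *\<^sub>R (X2a - F2a *\<^sub>R v) + (v \<bullet> a) *\<^sub>R (X2 - F2 *\<^sub>R v) + (v \<bullet> X2 - c\<^sup>2 * F2) *\<^sub>R a = 0"
proof -
  obtain g0 gx where g: "g = (g0, gx)" by (cases g)
  have F2: "F2 = fst (Bcf c g (1, v) (1, v))" and X2: "X2 = snd (Bcf c g (1, v) (1, v))"
    and F2a: "F2a = fst (Bcf c g (1, v) (0, a))" and X2a: "X2a = snd (Bcf c g (1, v) (0, a))"
    using assms by simp_all
  show ?thesis unfolding F2 X2 F2a X2a g Bcf_def mink_def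
    apply (simp add: vec_eq_iff inner_add_right inner_diff_right inner_commute algebra_simps inner_times2)
    apply (simp add: field_simps)
    done
qed

lemma QF_Phi:
  fixes V :: "real \<times> (real^'n) \<Rightarrow> real \<times> (real^'n)"
  assumes A: "linear A" and CKA: "\<And>h k. mink c h (A k) + mink c (A h) k = \<sigma>0 * mink c h k"
    and Veq: "\<And>p. V p = Y0 + A p + (1/2) *\<^sub>R Bcf c g p p" and nv: "norm v < c"
  shows "PhiV c V p v a = 0"
proof -
  note QD = QF_derivs[OF A Veq]
  define W where "W = c\<^sup>2 - v \<bullet> v"
  have W: "W > 0" unfolding W_def by (rule wpos[OF nv])
  obtain F1 X1 where T1: "A (1, v) + Bcf c g (1, v) p = (F1, X1)" by (cases "A (1, v) + Bcf c g (1, v) p")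
  obtain Fa Xa where Ta: "A (0, a) + Bcf c g (0, a) p = (Fa, Xa)" by (cases "A (0, a) + Bcf c g (0, a) p")
  obtain F2 X2 where Tuu: "Bcf c g (1, v) (1, v) = (F2, X2)" by (cases "Bcf c g (1, v) (1, v)")
  obtain F2a X2a where Tua: "Bcf c g (1, v) (0, a) = (F2a, X2a)" by (cases "Bcf c g (1, v) (0, a)")
  have CKp: "mink c h (A k + Bcf c g k p) + mink c (A h + Bcf c g h p) k = (\<sigma>0 + mink c p g) * mink c h k" for h k
    using CKA[of h k] Bcf_CK[of c h g k p] by (simp add: mink_add1 mink_add2 algebra_simps)
  have c1: "(- c\<^sup>2 * Fa + v \<bullet> Xa) + X1 \<bullet> a = (\<sigma>0 + mink c p g) * (v \<bullet> a)"
    using CKp[of "(1, v)" "(0, a)"] unfolding T1 Ta by (simp add: mink_def)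
  have c2: "2 * (- c\<^sup>2 * F1 + v \<bullet> X1) = (\<sigma>0 + mink c p g) * (- W)"
    using CKp[of "(1, v)" "(1, v)"] unfolding T1 by (simp add: mink_def W_def inner_commute algebra_simps)
  have H2: "W * (- c\<^sup>2 * Fa + v \<bullet> Xa + X1 \<bullet> a) + (v \<bullet> a) * (2 * (- c\<^sup>2 * F1 + v \<bullet> X1)) = 0"
  proof -
    have e1: "W * (- c\<^sup>2 * Fa + v \<bullet> Xa + X1 \<bullet> a) = W * ((\<sigma>0 + mink c p g) * (v \<bullet> a))" using c1 by simp
    have e2: "(v \<bullet> a) * (2 * (- c\<^sup>2 * F1 + v \<bullet> X1)) = (v \<bullet> a) * ((\<sigma>0 + mink c p g) * (- W))" using c2 by simp
    show ?thesis unfolding e1 e2 by (simp add: algebra_simps)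
  qed
  have H1: "W *\<^sub>R (X2a - F2a *\<^sub>R v) + (v \<bullet> a) *\<^sub>R (X2 - F2 *\<^sub>R v) + (v \<bullet> X2 - c\<^sup>2 * F2) *\<^sub>R a = 0"
    unfolding W_def by (rule H1_alg[OF Tuu Tua])
  have "PhiV c V p v a = Phi5 c v a (fst (V p)) (F1, X1) (Fa, Xa) (F2, X2) (F2a, X2a) (0, 0)"
    unfolding PhiV_Phi5[OF QD(1)] QD(2) QD(3) QD(4) T1 Ta Tuu Tua by (simp add: zero_prod_def)
  also have "\<dots> = 0"
    unfolding Phi5_decomp[OF W_def[symmetric] less_imp_neq[OF W, symmetric]] H1 H2 by simp
  finally show ?thesis .
qed

lemma QF_lie:
  fixes V :: "real \<times> (real^'n) \<Rightarrow> real \<times> (real^'n)"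
  assumes Q: "QF c V"
  shows "lie_point_symmetry c V"
proof -
  obtain Y0 A g \<sigma>0 where A: "linear A" and CKA: "\<And>h k. mink c h (A k) + mink c (A h) k = \<sigma>0 * mink c h k"
    and Veq: "\<And>p. V p = Y0 + A p + (1/2) *\<^sub>R Bcf c g p p"
    using Q unfolding QF_def by blast
  note QD = QF_derivs[OF A Veq]
  show ?thesis unfolding lie_point_symmetry_def Let_def
  proof (intro conjI allI impI ballI)
    show "smooth_fun V" by (rule QD(1))
    fix I and x :: "real \<Rightarrow> real^'n" and t assume sol: "is_solution c I x" and t: "t \<in> I"
    have nv: "norm (vd x t) < c" using sol t unfolding is_solution_def by blast
    show "linB c (vd x t) ((vd ^^ 2) x t) ((vd ^^ 3) x t)
       (vd (\<lambda>t. snd (V (t, x t)) - fst (V (t, x t)) *\<^sub>R vd x t) t)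
       ((vd ^^ 2) (\<lambda>t. snd (V (t, x t)) - fst (V (t, x t)) *\<^sub>R vd x t) t)
       ((vd ^^ 3) (\<lambda>t. snd (V (t, x t)) - fst (V (t, x t)) *\<^sub>R vd x t) t) = 0"
      using sol_Phi[OF QD(1) sol t] QF_Phi[OF A CKA Veq nv] by simp
  qed
qed

lemma fst_sum: "fst (\<Sum>i\<in>S. f i) = (\<Sum>i\<in>S. fst (f i))"
  by (induction S rule: infinite_finite_induct) auto
lemma snd_sum: "snd (\<Sum>i\<in>S. f i) = (\<Sum>i\<in>S. snd (f i))"
  by (induction S rule: infinite_finite_induct) auto

lemma axis_comp: "axis i (1::real) $ k = (if k = i then 1 else 0)"
  by (simp add: axis_def)

lemma mult_if1: "(x::real) * (if P then 1 else 0) = (if P then x else 0)" by simp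
lemma mult_if2: "(y::real) * (if P then x else 0) = (if P then y * x else 0)" by simp

lemma span_eq:
  fixes p :: "real \<times> (real^'n)"
  shows "a0 *\<^sub>R G_t p + (\<Sum>i\<in>UNIV. a1 i *\<^sub>R G_x i p) + (\<Sum>i\<in>UNIV. a2 i *\<^sub>R G_boost c i p)
     + (\<Sum>i\<in>UNIV. \<Sum>j\<in>UNIV. a3 i j *\<^sub>R G_rot i j p) + a4 *\<^sub>R G_dil p + (\<Sum>i\<in>UNIV. a5 i *\<^sub>R G_sc c i p) + a6 *\<^sub>R G_sct c p
   = (a0, \<Sum>i\<in>UNIV. a1 i *\<^sub>R axis i 1) + (a4 *\<^sub>R p + (\<Sum>i\<in>UNIV. a2 i *\<^sub>R G_boost c i p) + (\<Sum>i\<in>UNIV. \<Sum>j\<in>UNIV. a3 i j *\<^sub>R G_rot i j p))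
     + (1/2) *\<^sub>R Bcf c (4 *\<^sub>R (- a6, \<Sum>i\<in>UNIV. a5 i *\<^sub>R axis i 1)) p p"
proof -
  obtain t x where p: "p = (t, x)" by (cases p)
  show ?thesis unfolding p
    apply (simp add: prod_eq_iff vec_eq_iff G_t_def G_x_def G_boost_def G_rot_def G_dil_def G_sc_def G_sct_def
        Bcf_def mink_def fst_sum snd_sum sum_component axis_comp inner_sum_right inner_axis
        sum_distrib_left sum_distrib_right algebra_simps)
    apply (simp add: power2_eq_square sum.distrib sum_subtractf mult_if1 mult_if2 sum.delta sum.delta' algebra_simps)
    done
qed

definition Apart :: "real \<Rightarrow> real \<Rightarrow> ('n \<Rightarrow> real) \<Rightarrow> ('n \<Rightarrow> 'n \<Rightarrow> real) \<Rightarrow> real \<times> (real^'n) \<Rightarrow> real \<times> (real^'n)" where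
  "Apart c a4 a2 a3 p = a4 *\<^sub>R p + (\<Sum>i\<in>UNIV. a2 i *\<^sub>R G_boost c i p) + (\<Sum>i\<in>UNIV. \<Sum>j\<in>UNIV. a3 i j *\<^sub>R G_rot i j p)"

lemma axis_inner: "axis i (1::real) \<bullet> y = y $ i"
  using inner_axis[of y i 1] by (simp add: inner_commute)

lemma Apart_linear:
  fixes a2 :: "'n::finite \<Rightarrow> real"
  shows "linear (Apart c a4 a2 a3)"
proof (rule linearI)
  fix p q :: "real \<times> (real^'n)" and r :: real
  obtain t x where p: "p = (t, x)" by (cases p)
  obtain s y where q: "q = (s, y)" by (cases q)
  show "Apart c a4 a2 a3 (p + q) = Apart c a4 a2 a3 p + Apart c a4 a2 a3 q"
    unfolding p q Apart_def G_boost_def G_rot_def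
    by (simp add: prod_eq_iff vec_eq_iff fst_sum snd_sum sum_component axis_comp algebra_simps sum.distrib sum_subtractf)
  show "Apart c a4 a2 a3 (r *\<^sub>R p) = r *\<^sub>R Apart c a4 a2 a3 p"
    unfolding p Apart_def G_boost_def G_rot_def
    by (simp add: prod_eq_iff vec_eq_iff fst_sum snd_sum sum_component axis_comp algebra_simps sum_distrib_left)
qed

lemma Apart_CK:
  fixes a2 :: "'n::finite \<Rightarrow> real"
  shows "mink c h (Apart c a4 a2 a3 k) + mink c (Apart c a4 a2 a3 h) k = (2 * a4) * mink c h k"
proof -
  obtain t x where h: "h = (t, x)" by (cases h)
  obtain s y where k: "k = (s, y)" by (cases k)
  show ?thesis unfolding h k Apart_def G_boost_def G_rot_def mink_def
    apply (simp add: fst_sum snd_sum inner_sum_right inner_sum_left inner_axis inner_diff_left inner_diff_right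
        inner_add_left inner_add_right algebra_simps sum.distrib sum_subtractf sum_distrib_left axis_inner sum_negf)
    done
qed

lemma sum_if_out: "(\<Sum>j\<in>S. if P then f j else (0::real)) = (if P then (\<Sum>j\<in>S. f j) else 0)"
  by simp

lemma span_QF:
  fixes V :: "real \<times> (real^'n) \<Rightarrow> real \<times> (real^'n)"
  assumes "in_generator_span c V"
  shows "QF c V"
proof -
  obtain a0 a1 a2 a3 a4 a5 a6 where Veq: "\<And>p. V p = a0 *\<^sub>R G_t p + (\<Sum>i\<in>UNIV. a1 i *\<^sub>R G_x i p)
               + (\<Sum>i\<in>UNIV. a2 i *\<^sub>R G_boost c i p)
               + (\<Sum>i\<in>UNIV. \<Sum>j\<in>UNIV. a3 i j *\<^sub>R G_rot i j p)
               + a4 *\<^sub>R G_dil p + (\<Sum>i\<in>UNIV. a5 i *\<^sub>R G_sc c i p) + a6 *\<^sub>R G_sct c p"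
    using assms unfolding in_generator_span_def by blast
  show ?thesis unfolding QF_def
  proof (intro exI conjI allI)
    show "linear (Apart c a4 a2 a3)" by (rule Apart_linear)
    show "mink c h (Apart c a4 a2 a3 k) + mink c (Apart c a4 a2 a3 h) k = (2 * a4) * mink c h k" for h k
      by (rule Apart_CK)
    show "V p = (a0, \<Sum>i\<in>UNIV. a1 i *\<^sub>R axis i 1) + Apart c a4 a2 a3 p
       + (1/2) *\<^sub>R Bcf c (4 *\<^sub>R (- a6, \<Sum>i\<in>UNIV. a5 i *\<^sub>R axis i 1)) p p" for p
      unfolding Veq span_eq Apart_def ..
  qed
qed

lemma pair_decomp: "((t::real), (x::real^'n)) = t *\<^sub>R (1, 0) + (\<Sum>j\<in>UNIV. (x $ j) *\<^sub>R (0, axis j 1))"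
proof -
  have "(\<Sum>i\<in>UNIV. (x $ i) *\<^sub>R ((0::real), axis i (1::real))) = (0, \<Sum>i\<in>UNIV. (x $ i) *\<^sub>R axis i 1)"
    by (induction rule: infinite_finite_induct) (auto simp: zero_prod_def)
  also have "\<dots> = (0, x)" using basis_expansion[of x] by (simp add: scalar_mult_eq_scaleR)
  finally show ?thesis by simp
qed

lemma vec_decomp: "(\<Sum>i\<in>UNIV. (x $ i) *\<^sub>R axis i (1::real)) = (x::real^'n)"
  using basis_expansion[of x] by (simp add: scalar_mult_eq_scaleR)

lemma QF_span:
  fixes V :: "real \<times> (real^'n) \<Rightarrow> real \<times> (real^'n)"
  assumes Q: "QF c V" and c: "c > 0"
  shows "in_generator_span c V"
proof -
  obtain Y0 A g \<sigma>0 where A: "linear A" and CKA: "\<And>h k. mink c h (A k) + mink c (A h) k = \<sigma>0 * mink c h k"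
    and Veq: "\<And>p. V p = Y0 + A p + (1/2) *\<^sub>R Bcf c g p p"
    using Q unfolding QF_def by blast
  define e where "e j = (0::real, axis j (1::real))" for j :: 'n
  define a2 where "a2 i = fst (A (e i))" for i
  define Am where "Am k j = snd (A (e j)) $ k" for k j
  define a3 where "a3 i j = (Am i j - Am j i) / 4" for i j
  have c2: "c\<^sup>2 \<noteq> 0" using c by simp
  have F1: "fst (A (1, 0)) = \<sigma>0 / 2"
    using CKA[of "(1, 0)" "(1, 0)"] c2 unfolding mink_def by (simp add: field_simps)
  have F2: "snd (A (1, 0)) $ k = c\<^sup>2 * a2 k" for k
    using CKA[of "(1, 0)" "e k"] unfolding mink_def e_def a2_def by (simp add: axis_inner inner_axis)
  have F3: "Am k j + Am j k = (if k = j then \<sigma>0 else 0)" for k j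
    using CKA[of "e k" "e j"] unfolding mink_def e_def Am_def by (simp add: axis_inner inner_axis axis_comp)
  have Adec: "A (t, x) = t *\<^sub>R A (1, 0) + (\<Sum>j\<in>UNIV. (x $ j) *\<^sub>R A (e j))" for t x
    unfolding e_def by (subst pair_decomp) (simp only: linear_add[OF A] linear_sum[OF A] linear_scale[OF A])
  have AA: "A p = Apart c (\<sigma>0 / 2) a2 a3 p" for p
  proof -
    obtain t x where p: "p = (t, x)" by (cases p)
    have fstA: "fst (A (t, x)) = t * (\<sigma>0 / 2) + (\<Sum>j\<in>UNIV. x $ j * a2 j)"
      unfolding Adec[of t x] by (simp add: fst_sum F1 a2_def)
    have sndA: "snd (A (t, x)) $ k = t * (c\<^sup>2 * a2 k) + (\<Sum>j\<in>UNIV. x $ j * Am k j)" for k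
      unfolding Adec[of t x] by (simp add: snd_sum sum_component F2 Am_def)
    have fstP: "fst (Apart c (\<sigma>0 / 2) a2 a3 (t, x)) = t * (\<sigma>0 / 2) + (\<Sum>j\<in>UNIV. x $ j * a2 j)"
      unfolding Apart_def G_boost_def G_rot_def by (simp add: fst_sum algebra_simps)
    have sndP: "snd (Apart c (\<sigma>0 / 2) a2 a3 (t, x)) $ k = (\<sigma>0 / 2) * x $ k + t * (c\<^sup>2 * a2 k)
        + ((\<Sum>j\<in>UNIV. a3 k j * x $ j) - (\<Sum>i\<in>UNIV. a3 i k * x $ i))" for k
      unfolding Apart_def G_boost_def G_rot_def
      by (simp add: snd_sum sum_component axis_comp mult_if1 mult_if2 sum_if_out sum.delta sum.delta' sum_subtractf algebra_simps)
    have key: "(\<Sum>j\<in>UNIV. a3 k j * x $ j) - (\<Sum>i\<in>UNIV. a3 i k * x $ i) = (\<Sum>j\<in>UNIV. x $ j * Am k j) - (\<sigma>0 / 2) * x $ k" for k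
    proof -
      have "(\<Sum>j\<in>UNIV. a3 k j * x $ j) - (\<Sum>i\<in>UNIV. a3 i k * x $ i) = (\<Sum>j\<in>UNIV. (a3 k j - a3 j k) * x $ j)"
        by (simp add: sum_subtractf left_diff_distrib)
      also have "\<dots> = (\<Sum>j\<in>UNIV. x $ j * Am k j - (if k = j then (\<sigma>0 / 2) * x $ j else 0))"
      proof (rule sum.cong[OF refl])
        fix j
        have e: "Am j k = (if k = j then \<sigma>0 else 0) - Am k j" using F3[of k j] by simp
        show "(a3 k j - a3 j k) * x $ j = x $ j * Am k j - (if k = j then (\<sigma>0 / 2) * x $ j else 0)"
          unfolding a3_def e by (cases "k = j") (simp_all add: field_simps)
      qed
      also have "\<dots> = (\<Sum>j\<in>UNIV. x $ j * Am k j) - (\<sigma>0 / 2) * x $ k"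
        by (simp add: sum_subtractf sum.delta)
      finally show ?thesis .
    qed
    show ?thesis unfolding p
      by (simp add: prod_eq_iff vec_eq_iff fstA sndA fstP sndP key)
  qed
  show ?thesis unfolding in_generator_span_def
  proof (intro exI allI)
    fix p
    show "V p = fst Y0 *\<^sub>R G_t p + (\<Sum>i\<in>UNIV. (snd Y0 $ i) *\<^sub>R G_x i p)
               + (\<Sum>i\<in>UNIV. a2 i *\<^sub>R G_boost c i p)
               + (\<Sum>i\<in>UNIV. \<Sum>j\<in>UNIV. a3 i j *\<^sub>R G_rot i j p)
               + (\<sigma>0 / 2) *\<^sub>R G_dil p + (\<Sum>i\<in>UNIV. (snd g $ i / 4) *\<^sub>R G_sc c i p) + (- fst g / 4) *\<^sub>R G_sct c p"
      unfolding span_eq Apart_def[symmetric] AA[symmetric]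
    proof -
      have "(fst Y0, \<Sum>i\<in>UNIV. (snd Y0 $ i) *\<^sub>R axis i 1) = Y0" by (simp add: vec_decomp)
      moreover have "4 *\<^sub>R (- (- fst g / 4), \<Sum>i\<in>UNIV. (snd g $ i / 4) *\<^sub>R axis i 1) = g"
      proof -
        have "(\<Sum>i\<in>UNIV. (snd g $ i / 4) *\<^sub>R axis i (1::real)) = (1/4) *\<^sub>R (\<Sum>i\<in>UNIV. (snd g $ i) *\<^sub>R axis i (1::real))"
          unfolding scaleR_sum_right by (rule sum.cong) simp_all
        then have "(\<Sum>i\<in>UNIV. (snd g $ i / 4) *\<^sub>R axis i (1::real)) = (1/4) *\<^sub>R snd g"
          unfolding vec_decomp .
        then show ?thesis by (simp add: prod_eq_iff)
      qed
      ultimately show "V p = (fst Y0, \<Sum>i\<in>UNIV. (snd Y0 $ i) *\<^sub>R axis i 1) + A p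
          + (1/2) *\<^sub>R Bcf c (4 *\<^sub>R (- (- fst g / 4), \<Sum>i\<in>UNIV. (snd g $ i / 4) *\<^sub>R axis i 1)) p p"
        using Veq by simp
    qed
  qed
qed

theorem mainTheorem6:
  fixes c :: real
  assumes "c > 0"
  shows "\<forall>V :: real \<times> (real^'n) \<Rightarrow> real \<times> (real^'n).
           lie_point_symmetry c V \<longleftrightarrow> in_generator_span c V"
  proof (intro allI iffI)
  fix V :: "real \<times> (real^'n) \<Rightarrow> real \<times> (real^'n)"
  assume "lie_point_symmetry c V"
  then show "in_generator_span c V" using QF_span[OF lie_QF[OF _ assms] assms] by blast
next
  fix V :: "real \<times> (real^'n) \<Rightarrow> real \<times> (real^'n)"
  assume "in_generator_span c V"
  then show "lie_point_symmetry c V" using QF_lie[OF span_QF] by blast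
qed

end
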